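(* Let $k$ be a field, $Q$ a finite connected quiver without oriented cycles with vertex set $Q_0$ and arrow set $Q_1$. Let $Z$ be a minimal set of paths of length at least $2$, and let $B$ be the set of paths of $Q$ (including vertices) which do not contain any path of $Z$. Then $$\dim_k H^1\big(kQ/\langle Z\rangle,\,kQ/\langle Z\rangle\big)=1-|Q_0|+|(Q_1/\!/B)_{ne}|.$$
   Context: $kQ$ is the path algebra of $Q$ and $\langle Z\rangle$ the two-sided ideal generated by $Z$; $H^1(\Lambda,\Lambda)$ is the first Hochschild cohomology (derivations modulo inner derivations). $Z$ is minimal means that no path in $Z$ has a strict sub-path belonging to $Z$. The set $B$ is a basis of $kQ/\langle Z\rangle$. Define $Q_1/\!/B=\{(a,\varepsilon)\in Q_1\times B\mid s(\varepsilon)=s(a),\ t(\varepsilon)=t(a)\}$ (pairs of parallel arrow and path). A pair $(a,\varepsilon)\in Q_1/\!/B$ is glued if $a$ is the first or the last arrow of $\varepsilon$, or if $a$ is a loop and $\varepsilon$ is the vertex of that loop. A pair $(a,\varepsilon)$ is effective if (1) it is not glued, and (2) there exists a path $\gamma\in Z$ containing $a$ such that replacing $a$ by $\varepsilon$ inside $\gamma$ yields a path belonging to $B$. $(Q_1/\!/B)_{ne}$ denotes the set of elements of $Q_1/\!/B$ which are not effective. *)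

theory Defs
  imports Complex_Main "HOL-Library.Function_Algebras"
begin

text \<open>A path is a pair (v, as): a start vertex v and a list of composable arrows (first arrow
first).  Paths of length 0 are the vertices (v, []).\<close>

type_synonym ('v, 'a) path = "'v \<times> 'a list"

definition is_path :: "'v set \<Rightarrow> 'a set \<Rightarrow> ('a \<Rightarrow> 'v) \<Rightarrow> ('a \<Rightarrow> 'v) \<Rightarrow> ('v,'a) path \<Rightarrow> bool" where
  "is_path Q0 Q1 s t p \<longleftrightarrow>
     fst p \<in> Q0 \<and> set (snd p) \<subseteq> Q1 \<and>
     (snd p \<noteq> [] \<longrightarrow> s (hd (snd p)) = fst p) \<and>
     (\<forall>i. Suc i < length (snd p) \<longrightarrow> t (snd p ! i) = s (snd p ! Suc i))"

definition paths :: "'v set \<Rightarrow> 'a set \<Rightarrow> ('a \<Rightarrow> 'v) \<Rightarrow> ('a \<Rightarrow> 'v) \<Rightarrow> ('v,'a) path set" where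
  "paths Q0 Q1 s t = {p. is_path Q0 Q1 s t p}"

definition psrc :: "('v,'a) path \<Rightarrow> 'v" where
  "psrc p = fst p"

definition ptgt :: "('a \<Rightarrow> 'v) \<Rightarrow> ('v,'a) path \<Rightarrow> 'v" where
  "ptgt t p = (if snd p = [] then fst p else t (last (snd p)))"

definition plen :: "('v,'a) path \<Rightarrow> nat" where
  "plen p = length (snd p)"

text \<open>Concatenation p then q (meaningful when ptgt p = psrc q).\<close>
definition pcat :: "('v,'a) path \<Rightarrow> ('v,'a) path \<Rightarrow> ('v,'a) path" where
  "pcat p q = (fst p, snd p @ snd q)"

definition subpath :: "'v set \<Rightarrow> 'a set \<Rightarrow> ('a \<Rightarrow> 'v) \<Rightarrow> ('a \<Rightarrow> 'v) \<Rightarrow> ('v,'a) path \<Rightarrow> ('v,'a) path \<Rightarrow> bool" where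
  "subpath Q0 Q1 s t q p \<longleftrightarrow>
     (\<exists>u\<in>paths Q0 Q1 s t. \<exists>w\<in>paths Q0 Q1 s t.
        ptgt t u = psrc q \<and> ptgt t q = psrc w \<and> p = pcat (pcat u q) w)"

definition finite_quiver :: "'v set \<Rightarrow> 'a set \<Rightarrow> ('a \<Rightarrow> 'v) \<Rightarrow> ('a \<Rightarrow> 'v) \<Rightarrow> bool" where
  "finite_quiver Q0 Q1 s t \<longleftrightarrow> finite Q0 \<and> finite Q1 \<and> (\<forall>a\<in>Q1. s a \<in> Q0 \<and> t a \<in> Q0)"

definition connected_quiver :: "'v set \<Rightarrow> 'a set \<Rightarrow> ('a \<Rightarrow> 'v) \<Rightarrow> ('a \<Rightarrow> 'v) \<Rightarrow> bool" where
  "connected_quiver Q0 Q1 s t \<longleftrightarrow> Q0 \<noteq> {} \<and>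
     (\<forall>u\<in>Q0. \<forall>v\<in>Q0. (u, v) \<in> ({(s a, t a) | a. a \<in> Q1} \<union> {(t a, s a) | a. a \<in> Q1})\<^sup>*)"

definition acyclic_quiver :: "'v set \<Rightarrow> 'a set \<Rightarrow> ('a \<Rightarrow> 'v) \<Rightarrow> ('a \<Rightarrow> 'v) \<Rightarrow> bool" where
  "acyclic_quiver Q0 Q1 s t \<longleftrightarrow>
     (\<forall>p\<in>paths Q0 Q1 s t. plen p \<ge> 1 \<longrightarrow> psrc p \<noteq> ptgt t p)"

definition minimal_relations :: "'v set \<Rightarrow> 'a set \<Rightarrow> ('a \<Rightarrow> 'v) \<Rightarrow> ('a \<Rightarrow> 'v) \<Rightarrow> ('v,'a) path set \<Rightarrow> bool" where
  "minimal_relations Q0 Q1 s t Z \<longleftrightarrow>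
     Z \<subseteq> paths Q0 Q1 s t \<and> (\<forall>z\<in>Z. plen z \<ge> 2) \<and>
     (\<forall>z\<in>Z. \<forall>z'\<in>Z. subpath Q0 Q1 s t z' z \<longrightarrow> z' = z)"

definition basisB :: "'v set \<Rightarrow> 'a set \<Rightarrow> ('a \<Rightarrow> 'v) \<Rightarrow> ('a \<Rightarrow> 'v) \<Rightarrow> ('v,'a) path set \<Rightarrow> ('v,'a) path set" where
  "basisB Q0 Q1 s t Z = {p \<in> paths Q0 Q1 s t. \<forall>z\<in>Z. \<not> subpath Q0 Q1 s t z p}"

definition pathalg :: "'v set \<Rightarrow> 'a set \<Rightarrow> ('a \<Rightarrow> 'v) \<Rightarrow> ('a \<Rightarrow> 'v) \<Rightarrow> (('v,'a) path \<Rightarrow> 'k::field) set" where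
  "pathalg Q0 Q1 s t = {f. \<forall>p. p \<notin> paths Q0 Q1 s t \<longrightarrow> f p = 0}"

definition pmul :: "'v set \<Rightarrow> 'a set \<Rightarrow> ('a \<Rightarrow> 'v) \<Rightarrow> ('a \<Rightarrow> 'v) \<Rightarrow>
    (('v,'a) path \<Rightarrow> 'k::field) \<Rightarrow> (('v,'a) path \<Rightarrow> 'k) \<Rightarrow> (('v,'a) path \<Rightarrow> 'k)" where
  "pmul Q0 Q1 s t f g = (\<lambda>r. \<Sum>pq\<in>{(p,q). p \<in> paths Q0 Q1 s t \<and> q \<in> paths Q0 Q1 s t \<and>
        ptgt t p = psrc q \<and> pcat p q = r}. f (fst pq) * g (snd pq))"

definition delta :: "('v,'a) path \<Rightarrow> (('v,'a) path \<Rightarrow> 'k::field)" where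
  "delta z = (\<lambda>p. if p = z then 1 else 0)"

inductive_set gen_ideal :: "'v set \<Rightarrow> 'a set \<Rightarrow> ('a \<Rightarrow> 'v) \<Rightarrow> ('a \<Rightarrow> 'v) \<Rightarrow> ('v,'a) path set
     \<Rightarrow> (('v,'a) path \<Rightarrow> 'k::field) set"
  for Q0 Q1 s t Z where
  gen: "z \<in> Z \<Longrightarrow> delta z \<in> gen_ideal Q0 Q1 s t Z"
| zero: "(\<lambda>_. 0) \<in> gen_ideal Q0 Q1 s t Z"
| add: "x \<in> gen_ideal Q0 Q1 s t Z \<Longrightarrow> y \<in> gen_ideal Q0 Q1 s t Z \<Longrightarrow> (\<lambda>p. x p + y p) \<in> gen_ideal Q0 Q1 s t Z"
| smult: "x \<in> gen_ideal Q0 Q1 s t Z \<Longrightarrow> (\<lambda>p. c * x p) \<in> gen_ideal Q0 Q1 s t Z"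
| lmult: "x \<in> gen_ideal Q0 Q1 s t Z \<Longrightarrow> a \<in> pathalg Q0 Q1 s t \<Longrightarrow> pmul Q0 Q1 s t a x \<in> gen_ideal Q0 Q1 s t Z"
| rmult: "x \<in> gen_ideal Q0 Q1 s t Z \<Longrightarrow> a \<in> pathalg Q0 Q1 s t \<Longrightarrow> pmul Q0 Q1 s t x a \<in> gen_ideal Q0 Q1 s t Z"

text \<open>k-linear endomorphisms of kQ are represented by matrices M (M p q = coefficient of
q in the image of p), supported on paths x paths.\<close>

definition endo_mats :: "'v set \<Rightarrow> 'a set \<Rightarrow> ('a \<Rightarrow> 'v) \<Rightarrow> ('a \<Rightarrow> 'v) \<Rightarrow>
    (('v,'a) path \<Rightarrow> ('v,'a) path \<Rightarrow> 'k::field) set" where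
  "endo_mats Q0 Q1 s t = {M. \<forall>p q. p \<notin> paths Q0 Q1 s t \<or> q \<notin> paths Q0 Q1 s t \<longrightarrow> M p q = 0}"

definition mapp :: "'v set \<Rightarrow> 'a set \<Rightarrow> ('a \<Rightarrow> 'v) \<Rightarrow> ('a \<Rightarrow> 'v) \<Rightarrow>
    (('v,'a) path \<Rightarrow> ('v,'a) path \<Rightarrow> 'k::field) \<Rightarrow> (('v,'a) path \<Rightarrow> 'k) \<Rightarrow> (('v,'a) path \<Rightarrow> 'k)" where
  "mapp Q0 Q1 s t M f = (\<lambda>q. \<Sum>p\<in>paths Q0 Q1 s t. f p * M p q)"

text \<open>Lifts of derivations of A = kQ/I: linear maps D of kQ with D(I) in I and
D(xy) - x D(y) - D(x) y in I.\<close>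
definition der_lifts :: "'v set \<Rightarrow> 'a set \<Rightarrow> ('a \<Rightarrow> 'v) \<Rightarrow> ('a \<Rightarrow> 'v) \<Rightarrow> ('v,'a) path set \<Rightarrow>
    (('v,'a) path \<Rightarrow> ('v,'a) path \<Rightarrow> 'k::field) set" where
  "der_lifts Q0 Q1 s t Z =
    {M \<in> endo_mats Q0 Q1 s t.
       (\<forall>x\<in>gen_ideal Q0 Q1 s t Z. mapp Q0 Q1 s t M x \<in> gen_ideal Q0 Q1 s t Z) \<and>
       (\<forall>x\<in>pathalg Q0 Q1 s t. \<forall>y\<in>pathalg Q0 Q1 s t.
          (\<lambda>r. mapp Q0 Q1 s t M (pmul Q0 Q1 s t x y) r
               - pmul Q0 Q1 s t x (mapp Q0 Q1 s t M y) r
               - pmul Q0 Q1 s t (mapp Q0 Q1 s t M x) y r) \<in> gen_ideal Q0 Q1 s t Z)}"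

text \<open>Lifts of inner derivations: D(x) = c x - x c modulo I for some c in kQ.\<close>
definition inn_lifts :: "'v set \<Rightarrow> 'a set \<Rightarrow> ('a \<Rightarrow> 'v) \<Rightarrow> ('a \<Rightarrow> 'v) \<Rightarrow> ('v,'a) path set \<Rightarrow>
    (('v,'a) path \<Rightarrow> ('v,'a) path \<Rightarrow> 'k::field) set" where
  "inn_lifts Q0 Q1 s t Z =
    {M \<in> endo_mats Q0 Q1 s t.
       \<exists>c\<in>pathalg Q0 Q1 s t. \<forall>x\<in>pathalg Q0 Q1 s t.
          (\<lambda>r. mapp Q0 Q1 s t M x r - (pmul Q0 Q1 s t c x r - pmul Q0 Q1 s t x c r))
            \<in> gen_ideal Q0 Q1 s t Z}"

definition mat_scale :: "'k::field \<Rightarrow> ('p \<Rightarrow> 'p \<Rightarrow> 'k) \<Rightarrow> ('p \<Rightarrow> 'p \<Rightarrow> 'k)" where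
  "mat_scale c M = (\<lambda>p q. c * M p q)"

text \<open>dim_k H^1(A,A) = dim Der(A) - dim Inn(A) = dim der_lifts - dim inn_lifts
(both contain the maps with image in I, which induce 0 on A).\<close>
definition HH1_dim :: "'v set \<Rightarrow> 'a set \<Rightarrow> ('a \<Rightarrow> 'v) \<Rightarrow> ('a \<Rightarrow> 'v) \<Rightarrow> ('v,'a) path set \<Rightarrow> 'k::field itself \<Rightarrow> int" where
  "HH1_dim Q0 Q1 s t Z (_::'k itself) =
     int (vector_space.dim (mat_scale :: 'k \<Rightarrow> _) (der_lifts Q0 Q1 s t Z :: (_ \<Rightarrow> _ \<Rightarrow> 'k) set))
   - int (vector_space.dim (mat_scale :: 'k \<Rightarrow> _) (inn_lifts Q0 Q1 s t Z :: (_ \<Rightarrow> _ \<Rightarrow> 'k) set))"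

definition parallel_pairs :: "'v set \<Rightarrow> 'a set \<Rightarrow> ('a \<Rightarrow> 'v) \<Rightarrow> ('a \<Rightarrow> 'v) \<Rightarrow> ('v,'a) path set \<Rightarrow> ('a \<times> ('v,'a) path) set" where
  "parallel_pairs Q0 Q1 s t B = {(a, e). a \<in> Q1 \<and> e \<in> B \<and> psrc e = s a \<and> ptgt t e = t a}"

definition glued :: "('a \<Rightarrow> 'v) \<Rightarrow> ('a \<Rightarrow> 'v) \<Rightarrow> 'a \<Rightarrow> ('v,'a) path \<Rightarrow> bool" where
  "glued s t a e \<longleftrightarrow>
     (snd e \<noteq> [] \<and> (hd (snd e) = a \<or> last (snd e) = a)) \<or>
     (s a = t a \<and> snd e = [] \<and> fst e = s a)"

definition effective :: "'v set \<Rightarrow> 'a set \<Rightarrow> ('a \<Rightarrow> 'v) \<Rightarrow> ('a \<Rightarrow> 'v) \<Rightarrow> ('v,'a) path set \<Rightarrow> 'a \<Rightarrow> ('v,'a) path \<Rightarrow> bool" where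
  "effective Q0 Q1 s t Z a e \<longleftrightarrow>
     \<not> glued s t a e \<and>
     (\<exists>\<gamma>\<in>Z. \<exists>xs ys. snd \<gamma> = xs @ a # ys \<and>
        (fst \<gamma>, xs @ snd e @ ys) \<in> basisB Q0 Q1 s t Z)"

definition non_effective :: "'v set \<Rightarrow> 'a set \<Rightarrow> ('a \<Rightarrow> 'v) \<Rightarrow> ('a \<Rightarrow> 'v) \<Rightarrow> ('v,'a) path set \<Rightarrow> ('a \<times> ('v,'a) path) set" where
  "non_effective Q0 Q1 s t Z =
     {(a, e) \<in> parallel_pairs Q0 Q1 s t (basisB Q0 Q1 s t Z). \<not> effective Q0 Q1 s t Z a e}"

end

theory Submission
  imports Defs
begin


lemma sum_fun_apply: "finite A \<Longrightarrow> (sum f A) x = sum (\<lambda>a. f a x) A"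
  by (induction A rule: finite_induct) auto

context vector_space_pair begin

lemma rank_nullity:
  assumes lf: "Vector_Spaces.linear s1 s2 f" and V: "vs1.subspace V" and F: "finite F" and VF: "V \<subseteq> vs1.span F"
  shows "vs1.dim V = vs1.dim (V \<inter> {x. f x = 0}) + vs2.dim (f ` V)"
proof -
  obtain K where K: "K \<subseteq> V \<inter> {x. f x = 0}" "vs1.independent K" "V \<inter> {x. f x = 0} \<subseteq> vs1.span K"
      "card K = vs1.dim (V \<inter> {x. f x = 0})"
    using vs1.basis_exists by blast
  obtain B where B: "K \<subseteq> B" "B \<subseteq> V" "vs1.independent B" "V \<subseteq> vs1.span B"
    using vs1.maximal_independent_subset_extend[of K V] K by auto
  have BF: "B \<subseteq> vs1.span F" using B(2) VF by (rule order_trans)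
  have finB: "finite B"
    using vs1.independent_span_bound[OF F B(3) BF] by (rule conjunct1)
  have "vs1.span B = vs1.span V"
  proof (rule subset_antisym)
    show "vs1.span B \<subseteq> vs1.span V" using B(2) by (rule vs1.span_mono)
    have "vs1.span V \<subseteq> vs1.span (vs1.span B)" using B(4) by (rule vs1.span_mono)
    then show "vs1.span V \<subseteq> vs1.span B" unfolding vs1.span_span .
  qed
  then have dimV: "vs1.dim V = card B"
    by (rule vs1.dim_eq_card[OF _ B(3)])
  define L where "L = B - K"
  have finL: "finite L" "finite K" using finB B(1) unfolding L_def by (auto intro: finite_subset)
  have KL: "K \<inter> L = {}" "B = K \<union> L" using L_def B(1) by auto
  have spanLV: "vs1.span L \<subseteq> V"
    by (rule vs1.span_minimal) (use B(2) L_def V in auto)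
  have key: "x = 0" if x: "x \<in> vs1.span L" "f x = 0" for x
  proof -
    obtain c where c: "x = (\<Sum>v\<in>L. c v *a v)"
      using x(1) vs1.span_finite[OF finL(1)] by auto
    have "x \<in> V \<inter> {x. f x = 0}" using x spanLV by auto
    then have "x \<in> vs1.span K" using K by auto
    then obtain w where w: "x = (\<Sum>v\<in>K. w v *a v)"
      using vs1.span_finite[OF finL(2)] by auto
    define d where "d v = (if v \<in> L then c v else - w v)" for v
    have "(\<Sum>v\<in>B. d v *a v) = (\<Sum>v\<in>K. d v *a v) + (\<Sum>v\<in>L. d v *a v)"
      using KL finL by (simp add: sum.union_disjoint)
    also have "(\<Sum>v\<in>L. d v *a v) = x" using c d_def by simp
    also have "(\<Sum>v\<in>K. d v *a v) = (\<Sum>v\<in>K. - (w v *a v))" using KL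
      by (auto simp: d_def vs1.scale_minus_left intro!: sum.cong)
    also have "\<dots> = - x" using w by (simp add: sum_negf)
    finally have "(\<Sum>v\<in>B. d v *a v) = 0" by simp
    then have "\<forall>v\<in>B. d v = 0"
      using vs1.dependent_finite[OF finB] B(3) by blast
    then have "\<forall>v\<in>L. c v = 0"
    proof (intro ballI)
      fix v assume "\<forall>v\<in>B. d v = 0" "v \<in> L"
      then have "d v = 0" using KL by auto
      then show "c v = 0" using \<open>v \<in> L\<close> d_def by simp
    qed
    then show ?thesis using c by simp
  qed
  have injL: "inj_on f (vs1.span L)"
    unfolding linear_inj_on_iff_eq_0[OF lf vs1.subspace_span] using key by blast
  have indL: "vs2.independent (f ` L)"
  proof -
    have "vs1.independent L" using vs1.independent_mono[OF B(3)] L_def by auto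
    then show ?thesis using linear_independent_injective_image[OF lf _ injL] by blast
  qed
  have cardfL: "card (f ` L) = card L"
  proof -
    have "inj_on f L" using inj_on_subset[OF injL vs1.span_superset] .
    then show ?thesis by (rule card_image)
  qed
  have "f ` V \<subseteq> vs2.span (f ` L)"
  proof
    fix y assume "y \<in> f ` V"
    then obtain x where x: "x \<in> V" "y = f x" by auto
    then have "x \<in> vs1.span B" using B by auto
    then obtain u where u: "x = (\<Sum>v\<in>B. u v *a v)" using vs1.span_finite[OF finB] by auto
    have "f x = (\<Sum>v\<in>B. u v *b f v)"
      unfolding u linear_sum[OF lf] linear_scale[OF lf] by (rule refl)
    also have "\<dots> = (\<Sum>v\<in>K. u v *b f v) + (\<Sum>v\<in>L. u v *b f v)"
      using KL finL by (simp add: sum.union_disjoint)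
    also have "(\<Sum>v\<in>K. u v *b f v) = 0" using K(1) by (auto intro!: sum.neutral)
    finally have fxL: "f x = (\<Sum>v\<in>L. u v *b f v)" by simp
    then show "y \<in> vs2.span (f ` L)"
    proof -
      have "(\<Sum>v\<in>L. u v *b f v) \<in> vs2.span (f ` L)"
      proof (rule vs2.span_sum)
        fix v assume "v \<in> L"
        then have "f v \<in> vs2.span (f ` L)" by (intro vs2.span_base) auto
        then show "u v *b f v \<in> vs2.span (f ` L)" by (rule vs2.span_scale)
      qed
      then show ?thesis using x(2) fxL by simp
    qed
  qed
  moreover have "f ` L \<subseteq> f ` V" using L_def B(2) by auto
  ultimately have sp: "vs2.span (f ` L) = vs2.span (f ` V)"
    using vs2.span_mono vs2.span_span by (metis subset_antisym)
  have d2: "vs2.dim (f ` V) = card (f ` L)"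
    by (rule vs2.dim_eq_card[OF sp indL])
  have "card B = card K + card L"
    unfolding KL(2) by (rule card_Un_disjoint[OF finL(2) finL(1) KL(1)])
  then show ?thesis using dimV K(4) cardfL d2 by simp
qed

end

definition fscale :: "'k::field \<Rightarrow> ('x \<Rightarrow> 'k) \<Rightarrow> ('x \<Rightarrow> 'k)" where
  "fscale c f = (\<lambda>x. c * f x)"

lemma vs_fscale: "vector_space (fscale :: 'k::field \<Rightarrow> ('x \<Rightarrow> 'k) \<Rightarrow> _)"
  by unfold_locales (auto simp: fscale_def fun_eq_iff algebra_simps)

definition ind :: "'x \<Rightarrow> 'x \<Rightarrow> 'k::field" where "ind y = (\<lambda>x. if x = y then 1 else 0)"

definition coord :: "'x set \<Rightarrow> ('x \<Rightarrow> 'k::field) set" where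
  "coord S = {f. \<forall>x. x \<notin> S \<longrightarrow> f x = 0}"

lemma coord_span:
  assumes "finite S" "f \<in> coord S"
  shows "f = (\<Sum>y\<in>S. fscale (f y) (ind y))"
  using assms by (auto simp: fun_eq_iff sum_fun_apply fscale_def ind_def coord_def if_distrib cong: if_cong)

lemma dim_coord:
  assumes "finite S"
  shows "vector_space.dim (fscale :: 'k::field \<Rightarrow> _) (coord S :: ('x \<Rightarrow> 'k) set) = card S"
proof -
  interpret vs: vector_space "fscale :: 'k \<Rightarrow> ('x \<Rightarrow> 'k) \<Rightarrow> _" by (rule vs_fscale)
  have inj: "inj_on (ind :: 'x \<Rightarrow> 'x \<Rightarrow> 'k) S"
    by (auto simp: inj_on_def ind_def fun_eq_iff)
  have sub: "vs.subspace (coord S :: ('x \<Rightarrow> 'k) set)"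
    by (auto simp: vs.subspace_def coord_def fscale_def)
  have "ind ` S \<subseteq> coord S" by (auto simp: ind_def coord_def)
  then have sp1: "vs.span (ind ` S) \<subseteq> coord S" using sub by (rule vs.span_minimal)
  have sp2: "coord S \<subseteq> vs.span (ind ` S)"
  proof
    fix f :: "'x \<Rightarrow> 'k" assume f: "f \<in> coord S"
    have "f = (\<Sum>y\<in>S. fscale (f y) (ind y))" using coord_span[OF assms f] .
    also have "\<dots> \<in> vs.span (ind ` S)"
      by (intro vs.span_sum vs.span_scale vs.span_base) auto
    finally show "f \<in> vs.span (ind ` S)" .
  qed
  have indep: "vs.independent (ind ` S :: ('x \<Rightarrow> 'k) set)"
  proof
    assume "vs.dependent (ind ` S :: ('x \<Rightarrow> 'k) set)"
    then obtain u where u: "\<exists>v\<in>ind ` S. u v \<noteq> 0" "(\<Sum>v\<in>ind ` S. fscale (u v) v) = (0 :: 'x \<Rightarrow> 'k)"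
      using vs.dependent_finite[of "ind ` S"] assms by auto
    from u(1) obtain y where y: "y \<in> S" "u (ind y) \<noteq> 0" by auto
    have "(\<Sum>v\<in>ind ` S. fscale (u v) v) = (\<Sum>z\<in>S. fscale (u (ind z)) (ind z))"
      using sum.reindex[OF inj] by simp
    then have "(\<Sum>z\<in>S. fscale (u (ind z)) (ind z)) y = 0" using u(2) by simp
    moreover have "(\<Sum>z\<in>S. fscale (u (ind z)) (ind z)) y = (\<Sum>z\<in>S. if y = z then u (ind z) else 0)"
      unfolding sum_fun_apply[OF assms] by (rule sum.cong) (auto simp: fscale_def ind_def)
    moreover have "(\<Sum>z\<in>S. if y = z then u (ind z) else 0) = u (ind y)"
      using sum.delta'[OF assms, of y "\<lambda>z. u (ind z)"] y by simp
    ultimately have "u (ind y) = 0" by metis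
    then show False using y by simp
  qed
  have "vs.span (ind ` S) = vs.span (coord S :: ('x \<Rightarrow> 'k) set)"
  proof (rule subset_antisym)
    show "vs.span (ind ` S) \<subseteq> vs.span (coord S)" using sp1 vs.span_superset by (rule order_trans)
    show "vs.span (coord S) \<subseteq> vs.span (ind ` S)" using sp2 vs.span_minimal vs.subspace_span by blast
  qed
  then have "vs.dim (coord S :: ('x \<Rightarrow> 'k) set) = card (ind ` S :: ('x \<Rightarrow> 'k) set)"
    using vs.dim_eq_card[of "ind ` S" "coord S"] indep by simp
  then show ?thesis using card_image[OF inj] by simp
qed


fun chn :: "'a set \<Rightarrow> ('a \<Rightarrow> 'v) \<Rightarrow> ('a \<Rightarrow> 'v) \<Rightarrow> 'v \<Rightarrow> 'a list \<Rightarrow> bool" where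
  "chn Q1 s t v [] = True"
| "chn Q1 s t v (a # as) = (a \<in> Q1 \<and> s a = v \<and> chn Q1 s t (t a) as)"

lemma chn_nth:
  "chn Q1 s t v as \<longleftrightarrow> set as \<subseteq> Q1 \<and> (as \<noteq> [] \<longrightarrow> s (hd as) = v) \<and>
     (\<forall>i. Suc i < length as \<longrightarrow> t (as ! i) = s (as ! Suc i))"
proof (induction as arbitrary: v)
  case Nil then show ?case by simp
next
  case (Cons a as)
  show ?case
  proof
    assume h: "chn Q1 s t v (a # as)"
    then have "chn Q1 s t (t a) as" by simp
    then have ih: "set as \<subseteq> Q1 \<and> (as \<noteq> [] \<longrightarrow> s (hd as) = t a) \<and>
     (\<forall>i. Suc i < length as \<longrightarrow> t (as ! i) = s (as ! Suc i))" using Cons.IH by blast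
    show "set (a # as) \<subseteq> Q1 \<and> (a # as \<noteq> [] \<longrightarrow> s (hd (a # as)) = v) \<and>
     (\<forall>i. Suc i < length (a # as) \<longrightarrow> t ((a # as) ! i) = s ((a # as) ! Suc i))"
    proof (intro conjI allI impI)
      fix i assume "Suc i < length (a # as)"
      then show "t ((a # as) ! i) = s ((a # as) ! Suc i)"
        using ih by (cases i) (auto simp: hd_conv_nth)
    qed (use h ih in auto)
  next
    assume h: "set (a # as) \<subseteq> Q1 \<and> (a # as \<noteq> [] \<longrightarrow> s (hd (a # as)) = v) \<and>
     (\<forall>i. Suc i < length (a # as) \<longrightarrow> t ((a # as) ! i) = s ((a # as) ! Suc i))"
    have "set as \<subseteq> Q1 \<and> (as \<noteq> [] \<longrightarrow> s (hd as) = t a) \<and>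
     (\<forall>i. Suc i < length as \<longrightarrow> t (as ! i) = s (as ! Suc i))"
    proof (intro conjI allI impI)
      assume "as \<noteq> []"
      then show "s (hd as) = t a" using h[THEN conjunct2, THEN conjunct2, rule_format, of 0]
        by (auto simp: hd_conv_nth)
    next
      fix i assume "Suc i < length as"
      then show "t (as ! i) = s (as ! Suc i)"
        using h[THEN conjunct2, THEN conjunct2, rule_format, of "Suc i"] by auto
    qed (use h in auto)
    then show "chn Q1 s t v (a # as)" using Cons.IH h by auto
  qed
qed

lemma chn_append:
  "chn Q1 s t v (xs @ ys) \<longleftrightarrow> chn Q1 s t v xs \<and> chn Q1 s t (ptgt t (v, xs)) ys"
  by (induction xs arbitrary: v) (auto simp: ptgt_def)

lemma is_path_chn: "is_path Q0 Q1 s t (v, as) \<longleftrightarrow> v \<in> Q0 \<and> chn Q1 s t v as"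
  unfolding is_path_def chn_nth by auto

locale mq =
  fixes Q0 :: "'v set" and Q1 :: "'a set" and s t :: "'a \<Rightarrow> 'v" and Z :: "('v,'a) path set"
  assumes fq: "finite_quiver Q0 Q1 s t"
    and cq: "connected_quiver Q0 Q1 s t"
    and aq: "acyclic_quiver Q0 Q1 s t"
    and mr: "minimal_relations Q0 Q1 s t Z"
begin

abbreviation "P \<equiv> paths Q0 Q1 s t"
abbreviation "B \<equiv> basisB Q0 Q1 s t Z"
abbreviation "ch \<equiv> chn Q1 s t"
abbreviation comp :: "('v,'a) path \<Rightarrow> ('v,'a) path \<Rightarrow> bool" where "comp p q \<equiv> ptgt t p = psrc q"
definition arr :: "'a \<Rightarrow> ('v,'a) path" where "arr a = (s a, [a])"

lemma st_Q0: "a \<in> Q1 \<Longrightarrow> s a \<in> Q0 \<and> t a \<in> Q0"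
  using fq by (auto simp: finite_quiver_def)

lemma inP: "(v, as) \<in> P \<longleftrightarrow> v \<in> Q0 \<and> ch v as"
  by (simp add: paths_def is_path_chn)

lemma inP': "p \<in> P \<longleftrightarrow> fst p \<in> Q0 \<and> ch (fst p) (snd p)"
  using inP[of "fst p" "snd p"] by simp

lemma ch_Q0: "ch v as \<Longrightarrow> as \<noteq> [] \<Longrightarrow> ptgt t (v, as) \<in> Q0"
  by (induction as arbitrary: v) (auto simp: ptgt_def st_Q0 split: if_splits)

lemma ptgt_Q0: "p \<in> P \<Longrightarrow> ptgt t p \<in> Q0"
  using ch_Q0[of "fst p" "snd p"] by (cases "snd p = []") (auto simp: inP' ptgt_def)

lemma P_split: "(v, xs @ ys) \<in> P \<longleftrightarrow> (v, xs) \<in> P \<and> (ptgt t (v, xs), ys) \<in> P"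
  using ptgt_Q0[of "(v, xs)"] by (auto simp: inP chn_append)

lemma ptgt_append: "ptgt t (v, xs @ ys) = (if ys = [] then ptgt t (v, xs) else ptgt t (w, ys))"
  by (simp add: ptgt_def)

lemma pcat_P: "p \<in> P \<Longrightarrow> q \<in> P \<Longrightarrow> comp p q \<Longrightarrow> pcat p q \<in> P"
  by (cases p, cases q) (auto simp: pcat_def P_split psrc_def)

lemma ptgt_pcat: "comp p q \<Longrightarrow> ptgt t (pcat p q) = ptgt t q"
  by (cases p, cases q) (auto simp: pcat_def ptgt_def psrc_def)

lemma psrc_pcat: "psrc (pcat p q) = psrc p"
  by (simp add: pcat_def psrc_def)

lemma acyc: assumes "(v, as) \<in> P" "as \<noteq> []" shows "ptgt t (v, as) \<noteq> v"
proof -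
  have "\<forall>p\<in>P. plen p \<ge> 1 \<longrightarrow> psrc p \<noteq> ptgt t p" using aq by (simp add: acyclic_quiver_def)
  then have "plen (v,as) \<ge> 1 \<longrightarrow> psrc (v,as) \<noteq> ptgt t (v,as)" using assms(1) by blast
  moreover have "plen (v,as) \<ge> 1" using assms(2) by (simp add: plen_def Suc_le_eq)
  ultimately show ?thesis by (simp add: psrc_def)
qed

lemma arr_P: "a \<in> Q1 \<Longrightarrow> arr a \<in> P"
  by (auto simp: arr_def inP st_Q0)

lemma loopfree: "a \<in> Q1 \<Longrightarrow> s a \<noteq> t a"
  using acyc[of "s a" "[a]"] arr_P[of a] by (auto simp: arr_def ptgt_def)

lemma P_distinct: "(v, as) \<in> P \<Longrightarrow> distinct as"
proof (rule ccontr)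
  assume p: "(v, as) \<in> P" and nd: "\<not> distinct as"
  from not_distinct_decomp[OF nd] obtain xs ys zs a where "as = xs @ [a] @ ys @ [a] @ zs" by blast
  then have as: "as = xs @ a # ys @ a # zs" by simp
  have "(ptgt t (v, xs), a # ys @ a # zs) \<in> P" using p as P_split by auto
  then have h: "(ptgt t (v, xs), (a # ys) @ a # zs) \<in> P" by simp
  then have c1: "(ptgt t (v, xs), a # ys) \<in> P" and c2: "(ptgt t (ptgt t (v, xs), a # ys), a # zs) \<in> P"
    using P_split by blast+
  have "ptgt t (v, xs) = s a" using c1 by (simp add: inP)
  moreover have "ptgt t (ptgt t (v, xs), a # ys) = s a" using c2 by (simp add: inP)
  ultimately show False using acyc[OF c1] by simp
qed

lemma finite_P: "finite P"
proof -
  have "P \<subseteq> Q0 \<times> {as. set as \<subseteq> Q1 \<and> length as \<le> card Q1}"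
  proof
    fix p assume p: "p \<in> P"
    obtain v as where pv: "p = (v, as)" by (cases p)
    have "distinct as" using P_distinct p pv by simp
    moreover have "set as \<subseteq> Q1" using p pv by (simp add: paths_def is_path_def)
    ultimately have "length as \<le> card Q1"
      using fq distinct_card card_mono by (metis finite_quiver_def)
    then show "p \<in> Q0 \<times> {as. set as \<subseteq> Q1 \<and> length as \<le> card Q1}"
      using p pv \<open>set as \<subseteq> Q1\<close> by (auto simp: inP)
  qed
  moreover have "finite (Q0 \<times> {as. set as \<subseteq> Q1 \<and> length as \<le> card Q1})"
    using fq finite_lists_length_le by (auto simp: finite_quiver_def)
  ultimately show ?thesis by (rule finite_subset)
qed

lemma par_start:
  assumes "e \<in> P" "psrc e = s a" "ptgt t e = t a" "snd e = a # r" "a \<in> Q1"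
  shows "r = []"
proof (rule ccontr)
  assume r: "r \<noteq> []"
  have "(fst e, [a] @ r) \<in> P" using assms(1,4) by (cases e) auto
  then have "(ptgt t (fst e, [a]), r) \<in> P" using P_split by blast
  then have "(t a, r) \<in> P" by (simp add: ptgt_def)
  moreover have "ptgt t (t a, r) = t a" using assms(3,4) r by (cases e) (auto simp: ptgt_def)
  ultimately show False using acyc r by blast
qed

lemma par_end:
  assumes "e \<in> P" "psrc e = s a" "ptgt t e = t a" "snd e = r @ [a]" "a \<in> Q1"
  shows "r = []"
proof (rule ccontr)
  assume r: "r \<noteq> []"
  have "(fst e, r @ [a]) \<in> P" using assms(1,4) by (cases e) auto
  then have h: "(fst e, r) \<in> P" "(ptgt t (fst e, r), [a]) \<in> P" using P_split by blast+
  then have "ptgt t (fst e, r) = s a" by (simp add: inP)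
  moreover have "fst e = s a" using assms(2) by (simp add: psrc_def)
  ultimately show False using acyc[OF h(1) r] by simp
qed

lemma Z_P: "z \<in> Z \<Longrightarrow> z \<in> P" using mr by (auto simp: minimal_relations_def)
lemma Z_len: "z \<in> Z \<Longrightarrow> length (snd z) \<ge> 2" using mr by (auto simp: minimal_relations_def plen_def)

lemma subpath_iff:
  assumes q: "q \<in> P" "snd q \<noteq> []"
  shows "subpath Q0 Q1 s t q p \<longleftrightarrow> p \<in> P \<and> (\<exists>u w. snd p = u @ snd q @ w)"
proof
  assume "subpath Q0 Q1 s t q p"
  then obtain u w where u: "u \<in> P" "w \<in> P" "ptgt t u = psrc q" "ptgt t q = psrc w" "p = pcat (pcat u q) w"
    by (auto simp: subpath_def)
  have "pcat u q \<in> P" using pcat_P u q by blast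
  moreover have "ptgt t (pcat u q) = psrc w" using ptgt_pcat u by simp
  ultimately have "p \<in> P" using pcat_P u by blast
  then show "p \<in> P \<and> (\<exists>u w. snd p = u @ snd q @ w)" using u by (auto simp: pcat_def)
next
  assume "p \<in> P \<and> (\<exists>u w. snd p = u @ snd q @ w)"
  then obtain u w where p: "p \<in> P" "snd p = u @ snd q @ w" by blast
  obtain v as where pv: "p = (v, as)" by (cases p)
  obtain v' bs where qv: "q = (v', bs)" by (cases q)
  have "(v, u @ bs @ w) \<in> P" using p pv qv by simp
  then have h: "(v, u) \<in> P" "(ptgt t (v, u), bs @ w) \<in> P" using P_split by blast+
  then have h2: "(ptgt t (v, u), bs) \<in> P" "(ptgt t (ptgt t (v, u), bs), w) \<in> P" using P_split by blast+
  have bs: "bs \<noteq> []" using q qv by simp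
  have e1: "ptgt t (v, u) = v'" using h2(1) q(1) qv bs by (cases bs) (auto simp: inP)
  have e2: "ptgt t (ptgt t (v, u), bs) = ptgt t q" using qv bs by (simp add: ptgt_def)
  show "subpath Q0 Q1 s t q p"
    unfolding subpath_def
    apply (rule bexI[of _ "(v, u)"], rule bexI[of _ "(ptgt t q, w)"])
    using h h2 e1 e2 p pv qv by (auto simp: pcat_def psrc_def)
qed

lemma B_iff: "p \<in> B \<longleftrightarrow> p \<in> P \<and> (\<forall>z\<in>Z. \<not> (\<exists>u w. snd p = u @ snd z @ w))"
proof -
  have "\<And>z. z \<in> Z \<Longrightarrow> snd z \<noteq> []" using Z_len by fastforce
  then show ?thesis unfolding basisB_def using subpath_iff Z_P by auto
qed

lemma B_P: "p \<in> B \<Longrightarrow> p \<in> P" by (simp add: B_iff)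

lemma vtx_B: "v \<in> Q0 \<Longrightarrow> (v, []) \<in> B"
  using Z_len by (fastforce simp: B_iff inP)

lemma arr_B: "a \<in> Q1 \<Longrightarrow> arr a \<in> B"
proof -
  assume a: "a \<in> Q1"
  { fix z u w assume "z \<in> Z" "[a] = u @ snd z @ w"
    then have "length (snd z) \<le> 1" by (metis le_add1 le_add2 length_append list.size(3,4) order_trans One_nat_def add_0 plus_nat.simps(2))
    then have False using Z_len \<open>z \<in> Z\<close> by fastforce }
  then show ?thesis using arr_P[OF a] by (auto simp: B_iff arr_def)
qed

lemma B_split: "(v, xs @ ys) \<in> B \<Longrightarrow> (v, xs) \<in> B \<and> (ptgt t (v, xs), ys) \<in> B"
  unfolding B_iff using P_split
  by (metis append.assoc snd_conv)

lemma pcat_B: "p \<in> P \<Longrightarrow> q \<in> P \<Longrightarrow> comp p q \<Longrightarrow> pcat p q \<in> B \<Longrightarrow> p \<in> B \<and> q \<in> B"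
  using B_split[of "fst p" "snd p" "snd q"]
  by (cases p, cases q) (auto simp: pcat_def psrc_def)

end


lemma sum_collapse:
  assumes "finite S" "C \<Longrightarrow> g \<in> S"
  shows "(\<Sum>y\<in>S. if C \<and> y = g \<and> A y then v else 0) = (if C \<and> A g then v else 0)"
proof (cases C)
  case True
  then have "(\<Sum>y\<in>S. if C \<and> y = g \<and> A y then v else 0) = (\<Sum>y\<in>S. if y = g then (if A g then v else 0) else 0)"
    by (intro sum.cong) auto
  also have "\<dots> = (if A g then v else 0)"
    using sum.delta[OF assms(1), of g "\<lambda>_. if A g then v else 0"] True assms(2) by simp
  finally show ?thesis using True by simp
qed simp

context mq begin

abbreviation I :: "(('v,'a) path \<Rightarrow> 'k::field) set" where "I \<equiv> gen_ideal Q0 Q1 s t Z"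
abbreviation A :: "(('v,'a) path \<Rightarrow> 'k::field) set" where "A \<equiv> pathalg Q0 Q1 s t"
abbreviation pm :: "(('v,'a) path \<Rightarrow> 'k::field) \<Rightarrow> _ \<Rightarrow> _" where "pm \<equiv> pmul Q0 Q1 s t"
abbreviation mp :: "(('v,'a) path \<Rightarrow> ('v,'a) path \<Rightarrow> 'k::field) \<Rightarrow> _ \<Rightarrow> _" where "mp \<equiv> mapp Q0 Q1 s t"

lemma pmul_alt: "pm f g r = (\<Sum>p\<in>P. \<Sum>q\<in>P. if comp p q \<and> pcat p q = r then f p * g q else 0)"
proof -
  let ?S = "{(p,q). p \<in> P \<and> q \<in> P \<and> ptgt t p = psrc q \<and> pcat p q = r}"
  have "pm f g r = (\<Sum>pq\<in>?S. f (fst pq) * g (snd pq))" by (simp add: pmul_def)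
  also have "\<dots> = (\<Sum>pq\<in>P \<times> P. if comp (fst pq) (snd pq) \<and> pcat (fst pq) (snd pq) = r then f (fst pq) * g (snd pq) else 0)"
    by (rule sum.mono_neutral_cong_left) (auto simp: finite_P)
  also have "\<dots> = (\<Sum>(p,q)\<in>P \<times> P. if comp p q \<and> pcat p q = r then f p * g q else 0)"
    by (rule sum.cong) (auto simp: case_prod_beta)
  also have "\<dots> = (\<Sum>p\<in>P. \<Sum>q\<in>P. if comp p q \<and> pcat p q = r then f p * g q else 0)"
    by (rule sum.cartesian_product[symmetric])
  finally show ?thesis .
qed

lemma pmul_A: "pm f g \<in> A"
  unfolding pathalg_def mem_Collect_eq
proof (intro allI impI)
  fix r :: "('v,'a) path" assume r: "r \<notin> P"
  have H: "\<And>p q. p \<in> P \<Longrightarrow> q \<in> P \<Longrightarrow> \<not> (comp p q \<and> pcat p q = r)" using pcat_P r by blast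
  show "pm f g r = 0" unfolding pmul_alt by (intro sum.neutral ballI) (use H in auto)
qed

lemma delta_A: "p \<in> P \<Longrightarrow> delta p \<in> A"
  by (auto simp: pathalg_def delta_def)

lemma pmul_delta_r: "y \<in> P \<Longrightarrow> pm f (delta y) r = (\<Sum>x\<in>P. if comp x y \<and> pcat x y = r then f x else 0)"
  unfolding pmul_alt
proof (rule sum.cong[OF refl])
  fix x assume y: "y \<in> P"
  have "(\<Sum>q\<in>P. if comp x q \<and> pcat x q = r then f x * delta y q else 0)
      = (\<Sum>q\<in>P. if q = y then (if comp x y \<and> pcat x y = r then f x else 0) else 0)"
    by (rule sum.cong) (auto simp: delta_def)
  also have "\<dots> = (if comp x y \<and> pcat x y = r then f x else 0)" using y by (simp add: finite_P)
  finally show "(\<Sum>q\<in>P. if comp x q \<and> pcat x q = r then f x * delta y q else 0) = (if comp x y \<and> pcat x y = r then f x else 0)" .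
qed

lemma pmul_delta_l: "x \<in> P \<Longrightarrow> pm (delta x) g r = (\<Sum>y\<in>P. if comp x y \<and> pcat x y = r then g y else 0)"
proof -
  assume x: "x \<in> P"
  have "pm (delta x) g r = (\<Sum>p\<in>P. if p = x then (\<Sum>q\<in>P. if comp x q \<and> pcat x q = r then g q else 0) else 0)"
    unfolding pmul_alt by (rule sum.cong) (auto simp: delta_def cong: if_cong)
  also have "\<dots> = (\<Sum>y\<in>P. if comp x y \<and> pcat x y = r then g y else 0)" using x by (simp add: finite_P)
  finally show ?thesis .
qed

lemma pmul_delta_delta: "x \<in> P \<Longrightarrow> y \<in> P \<Longrightarrow>
   pm (delta x) (delta y) = (if comp x y then delta (pcat x y) else (\<lambda>_. 0 :: 'k::field))"
proof
  fix r assume x: "x \<in> P" and y: "y \<in> P"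
  have "pm (delta x) (delta y) r = (\<Sum>q\<in>P. if q = y then (if comp x y \<and> pcat x y = r then 1 else 0) else (0::'k))"
    unfolding pmul_delta_l[OF x] by (rule sum.cong) (auto simp: delta_def)
  also have "\<dots> = (if comp x y \<and> pcat x y = r then 1 else 0)" using y by (simp add: finite_P)
  finally show "pm (delta x) (delta y) r = (if comp x y then delta (pcat x y) else (\<lambda>_. 0 :: 'k)) r"
    by (auto simp: delta_def)
qed

lemma mapp_delta: "p \<in> P \<Longrightarrow> mp M (delta p) = M p"
proof
  fix q assume p: "p \<in> P"
  have "mp M (delta p) q = (\<Sum>p'\<in>P. if p' = p then M p q else 0)"
    unfolding mapp_def by (rule sum.cong) (auto simp: delta_def)
  then show "mp M (delta p) q = M p q" using p by (simp add: finite_P)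
qed

lemma mapp_zero: "mp M (\<lambda>_. 0) = (\<lambda>_. 0)"
  by (simp add: mapp_def)

lemma I_sub: "x \<in> I \<Longrightarrow> x \<in> A \<and> (\<forall>r\<in>B. x r = 0)"
proof (induction rule: gen_ideal.induct)
  case (gen z)
  have "z \<in> P" using Z_P gen by blast
  moreover have "z \<notin> B" using gen B_iff by (metis append.left_neutral append_Nil2)
  ultimately show ?case by (auto simp: pathalg_def delta_def)
next
  case zero then show ?case by (simp add: pathalg_def)
next
  case (add x y) then show ?case by (simp add: pathalg_def)
next
  case (smult x c) then show ?case by (simp add: pathalg_def)
next
  case (lmult x a)
  have "\<forall>r\<in>B. pm a x r = 0"
  proof
    fix r assume r: "r \<in> B"
    have "\<And>p q. p \<in> P \<Longrightarrow> q \<in> P \<Longrightarrow> (if comp p q \<and> pcat p q = r then a p * x q else 0) = 0"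
      using pcat_B r lmult.IH by auto
    then show "pm a x r = 0" unfolding pmul_alt by (simp add: sum.neutral)
  qed
  then show ?case using pmul_A by blast
next
  case (rmult x a)
  have "\<forall>r\<in>B. pm x a r = 0"
  proof
    fix r assume r: "r \<in> B"
    have "\<And>p q. p \<in> P \<Longrightarrow> q \<in> P \<Longrightarrow> (if comp p q \<and> pcat p q = r then x p * a q else 0) = 0"
      using pcat_B r rmult.IH by auto
    then show "pm x a r = 0" unfolding pmul_alt by (simp add: sum.neutral)
  qed
  then show ?case using pmul_A by blast
qed

lemma I_sum: "finite S \<Longrightarrow> (\<And>p. p \<in> S \<Longrightarrow> g p \<in> I) \<Longrightarrow> (\<lambda>r. \<Sum>p\<in>S. c p * g p r) \<in> I"
proof (induction S rule: finite_induct)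
  case empty then show ?case by (simp add: gen_ideal.zero)
next
  case (insert x F)
  have "(\<lambda>r. c x * g x r) \<in> I" using insert by (simp add: gen_ideal.smult)
  then have "(\<lambda>r. (\<lambda>r. c x * g x r) r + (\<lambda>r. \<Sum>p\<in>F. c p * g p r) r) \<in> I"
    using insert by (intro gen_ideal.add) auto
  then show ?case using insert by simp
qed

lemma delta_I: assumes p: "p \<in> P" "p \<notin> B" shows "(delta p :: _ \<Rightarrow> 'k::field) \<in> I"
proof -
  obtain z u w where z: "z \<in> Z" "snd p = u @ snd z @ w" using p B_iff by blast
  obtain v as where pv: "p = (v, as)" by (cases p)
  have zP: "z \<in> P" using Z_P z by blast
  have zne: "snd z \<noteq> []" using Z_len z by fastforce
  have h: "(v, u) \<in> P" "(ptgt t (v, u), snd z @ w) \<in> P" using P_split p pv z by auto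
  then have h2: "(ptgt t (v, u), snd z) \<in> P" "(ptgt t (ptgt t (v, u), snd z), w) \<in> P" using P_split by blast+
  have e1: "ptgt t (v, u) = fst z" using h2(1) zP zne by (cases "snd z") (auto simp: inP')
  have e2: "ptgt t (ptgt t (v, u), snd z) = ptgt t z" using zne by (simp add: ptgt_def)
  define U where "U = (v, u)"
  define W where "W = (ptgt t z, w)"
  have UW: "U \<in> P" "W \<in> P" "comp U z" "comp z W" using h h2 e1 e2 by (auto simp: U_def W_def psrc_def)
  have pUzW: "pcat (pcat U z) W = p" using pv z by (simp add: U_def W_def pcat_def)
  have cUz: "comp (pcat U z) W" using UW ptgt_pcat by simp
  have e3: "pm (delta U) (delta z) = (delta (pcat U z) :: _ \<Rightarrow> 'k)"
    using pmul_delta_delta[OF UW(1) zP] UW(3) by simp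
  have e4: "pm (delta (pcat U z)) (delta W) = (delta (pcat (pcat U z) W) :: _ \<Rightarrow> 'k)"
    using pmul_delta_delta[OF pcat_P[OF UW(1) zP UW(3)] UW(2)] cUz by simp
  have "pm (pm (delta U) (delta z)) (delta W) = (delta p :: _ \<Rightarrow> 'k)"
    by (simp only: e3 e4 pUzW)
  moreover have "pm (pm (delta U) (delta z)) (delta W) \<in> (I :: (_ \<Rightarrow> 'k) set)"
    using z UW zP by (intro gen_ideal.rmult gen_ideal.lmult gen_ideal.gen delta_A)
  ultimately show ?thesis by (simp only:)
qed

lemma I_iff: "x \<in> I \<longleftrightarrow> x \<in> A \<and> (\<forall>r\<in>B. x r = 0)"
proof
  assume "x \<in> A \<and> (\<forall>r\<in>B. x r = 0)"
  then have x: "x \<in> A" "\<forall>r\<in>B. x r = 0" by auto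
  have "(\<lambda>r. \<Sum>p\<in>P - B. x p * delta p r) \<in> I"
    using delta_I finite_P by (intro I_sum) auto
  moreover have "(\<lambda>r. \<Sum>p\<in>P - B. x p * delta p r) = x"
  proof
    fix r
    have "(\<Sum>p\<in>P - B. x p * delta p r) = (\<Sum>p\<in>P - B. if p = r then x r else 0)"
      by (rule sum.cong) (auto simp: delta_def)
    also have "\<dots> = x r"
    proof (cases "r \<in> P - B")
      case True then show ?thesis using finite_P by simp
    next
      case False
      then have "x r = 0" using x unfolding pathalg_def by blast
      then show ?thesis using False by (auto intro!: sum.neutral)
    qed
    finally show "(\<Sum>p\<in>P - B. x p * delta p r) = x r" .
  qed
  ultimately show "x \<in> I" by simp
qed (rule I_sub)

end


lemma if_sum: "(if c then sum f S else 0) = sum (\<lambda>i. if c then f i else 0) S"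
  by (cases c) simp_all

lemma if_mult_r: "(if c then a else 0) * (k::'k::field) = (if c then a * k else 0)"
  by simp

lemma sum_if_mult_r: "(\<Sum>i\<in>S. if c i then f i else 0) * (k::'k::field) = (\<Sum>i\<in>S. if c i then f i * k else 0)"
  unfolding sum_distrib_right by (rule sum.cong) simp_all

lemma sum_if_mult_l: "(k::'k::field) * (\<Sum>i\<in>S. if c i then f i else 0) = (\<Sum>i\<in>S. if c i then k * f i else 0)"
  by (simp add: sum_distrib_left if_distrib cong: if_cong)

lemma X3aux: "(if c then (\<Sum>p\<in>S. a p * m p) * k else 0) = (\<Sum>p\<in>S. if c then a p * k * m p else (0::'k::field))"
  by (cases c) (simp_all add: sum_distrib_right sum_distrib_left mult_ac)

context mq begin

abbreviation Dl :: "(('v,'a) path \<Rightarrow> ('v,'a) path \<Rightarrow> 'k::field) set" where "Dl \<equiv> der_lifts Q0 Q1 s t Z"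
abbreviation Nl :: "(('v,'a) path \<Rightarrow> ('v,'a) path \<Rightarrow> 'k::field) set" where "Nl \<equiv> inn_lifts Q0 Q1 s t Z"
abbreviation EM :: "(('v,'a) path \<Rightarrow> ('v,'a) path \<Rightarrow> 'k::field) set" where "EM \<equiv> endo_mats Q0 Q1 s t"

definition D2 :: "(('v,'a) path \<Rightarrow> ('v,'a) path \<Rightarrow> 'k::field) \<Rightarrow> bool" where
  "D2 M \<longleftrightarrow> (\<forall>p\<in>P. \<forall>q\<in>P. \<forall>r\<in>B.
     (if comp p q then M (pcat p q) r else 0) =
     (\<Sum>q'\<in>P. if comp p q' \<and> pcat p q' = r then M q q' else 0) +
     (\<Sum>p'\<in>P. if comp p' q \<and> pcat p' q = r then M p p' else 0))"

definition rowB :: "(('v,'a) path \<Rightarrow> ('v,'a) path \<Rightarrow> 'k::field) \<Rightarrow> bool" where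
  "rowB M \<longleftrightarrow> (\<forall>p r. p \<notin> B \<longrightarrow> r \<in> B \<longrightarrow> M p r = 0)"

lemma mapp_A: assumes "M \<in> EM" shows "mp M x \<in> A"
  unfolding pathalg_def mapp_def mem_Collect_eq
proof (intro allI impI)
  fix q assume q: "q \<notin> P"
  have "\<And>p. M p q = 0" using assms q unfolding endo_mats_def by blast
  then show "(\<Sum>p\<in>P. x p * M p q) = 0" by simp
qed

lemma D_props:
  assumes M: "(M :: _ \<Rightarrow> _ \<Rightarrow> 'k::field) \<in> Dl"
  shows "D2 M" "rowB M"
proof -
  have ME: "M \<in> EM" and Mder: "\<And>x y. x \<in> (A :: (_ \<Rightarrow> 'k) set) \<Longrightarrow> y \<in> (A :: (_ \<Rightarrow> 'k) set) \<Longrightarrow>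
      (\<lambda>r. mp M (pm x y) r - pm x (mp M y) r - pm (mp M x) y r) \<in> I"
    and MI: "\<And>x. x \<in> (I :: (_ \<Rightarrow> 'k) set) \<Longrightarrow> mp M x \<in> I"
    using M by (auto simp: der_lifts_def)
  show "D2 M" unfolding D2_def
  proof (intro ballI)
    fix p q r assume p: "p \<in> P" and q: "q \<in> P" and r: "r \<in> B"
    have "(\<lambda>r. mp M (pm (delta p) (delta q)) r - pm (delta p) (mp M (delta q)) r - pm (mp M (delta p)) (delta q) r) \<in> I"
      by (rule Mder[OF delta_A[OF p] delta_A[OF q]])
    then have h0: "mp M (pm (delta p) (delta q)) r - pm (delta p) (mp M (delta q)) r - pm (mp M (delta p)) (delta q) r = 0"
      using r unfolding I_iff by blast
    have h1: "mp M (pm (delta p) (delta q)) r = (if comp p q then M (pcat p q) r else 0)"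
    proof (cases "comp p q")
      case True
      then have "pm (delta p) (delta q) = (delta (pcat p q) :: _ \<Rightarrow> 'k)" using pmul_delta_delta[OF p q] by simp
      moreover have "mp M (delta (pcat p q)) = M (pcat p q)" by (rule mapp_delta[OF pcat_P[OF p q True]])
      ultimately show ?thesis using True by simp
    next
      case False
      then have "pm (delta p) (delta q) = (\<lambda>_. 0 :: 'k)" using pmul_delta_delta[OF p q] by simp
      moreover have "mp M (\<lambda>_. 0) = (\<lambda>_. 0 :: 'k)" by (rule mapp_zero)
      ultimately show ?thesis using False by simp
    qed
    have h2: "pm (delta p) (mp M (delta q)) r = (\<Sum>q'\<in>P. if comp p q' \<and> pcat p q' = r then M q q' else 0)"
      by (simp add: pmul_delta_l[OF p] mapp_delta[OF q])
    have h3: "pm (mp M (delta p)) (delta q) r = (\<Sum>p'\<in>P. if comp p' q \<and> pcat p' q = r then M p p' else 0)"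
      by (simp add: pmul_delta_r[OF q] mapp_delta[OF p])
    from h0 have "(if comp p q then M (pcat p q) r else 0) -
     (\<Sum>q'\<in>P. if comp p q' \<and> pcat p q' = r then M q q' else 0) -
     (\<Sum>p'\<in>P. if comp p' q \<and> pcat p' q = r then M p p' else 0) = 0" by (simp only: h1 h2 h3)
    then show "(if comp p q then M (pcat p q) r else 0) =
     (\<Sum>q'\<in>P. if comp p q' \<and> pcat p q' = r then M q q' else 0) +
     (\<Sum>p'\<in>P. if comp p' q \<and> pcat p' q = r then M p p' else 0)" by (simp only: diff_diff_eq right_minus_eq)
  qed
  show "rowB M" unfolding rowB_def
  proof (intro allI impI)
    fix p r assume p: "p \<notin> B" and r: "r \<in> B"
    show "M p r = 0"
    proof (cases "p \<in> P")
      case True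
      have "mp M (delta p) \<in> I" by (rule MI[OF delta_I[OF True p]])
      then show ?thesis using r unfolding I_iff mapp_delta[OF True] by blast
    next
      case False then show ?thesis using ME unfolding endo_mats_def by blast
    qed
  qed
qed

lemma X1: "mp M (pm x y) r = (\<Sum>p\<in>P. \<Sum>q\<in>P. x p * y q * (if comp p q then M (pcat p q) r else 0))"
proof -
  have "mp M (pm x y) r = (\<Sum>w\<in>P. \<Sum>p\<in>P. \<Sum>q\<in>P. if comp p q \<and> pcat p q = w then x p * y q * M w r else 0)"
    unfolding mapp_def pmul_alt by (simp add: sum_distrib_right if_mult_r cong: if_cong)
  also have "\<dots> = (\<Sum>p\<in>P. \<Sum>q\<in>P. \<Sum>w\<in>P. if comp p q \<and> pcat p q = w then x p * y q * M w r else 0)"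
  proof -
    have "(\<Sum>w\<in>P. \<Sum>p\<in>P. \<Sum>q\<in>P. if comp p q \<and> pcat p q = w then x p * y q * M w r else 0)
      = (\<Sum>p\<in>P. \<Sum>w\<in>P. \<Sum>q\<in>P. if comp p q \<and> pcat p q = w then x p * y q * M w r else 0)"
      by (rule sum.swap)
    also have "\<dots> = (\<Sum>p\<in>P. \<Sum>q\<in>P. \<Sum>w\<in>P. if comp p q \<and> pcat p q = w then x p * y q * M w r else 0)"
      by (rule sum.cong[OF refl], rule sum.swap)
    finally show ?thesis .
  qed
  also have "\<dots> = (\<Sum>p\<in>P. \<Sum>q\<in>P. x p * y q * (if comp p q then M (pcat p q) r else 0))"
  proof (intro sum.cong refl)
    fix p q assume pq: "p \<in> P" "q \<in> P"
    show "(\<Sum>w\<in>P. if comp p q \<and> pcat p q = w then x p * y q * M w r else 0) = x p * y q * (if comp p q then M (pcat p q) r else 0)"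
    proof (cases "comp p q")
      case True
      then have pP: "pcat p q \<in> P" using pcat_P pq by blast
      have "(\<Sum>w\<in>P. if comp p q \<and> pcat p q = w then x p * y q * M w r else 0)
          = (\<Sum>w\<in>P. if w = pcat p q then x p * y q * M (pcat p q) r else 0)"
        by (rule sum.cong) (auto simp: True)
      also have "\<dots> = x p * y q * M (pcat p q) r" by (simp add: sum.delta[OF finite_P] pP)
      finally show ?thesis using True by simp
    qed simp
  qed
  finally show ?thesis .
qed

lemma X2: "pm x (mp M y) r = (\<Sum>p\<in>P. \<Sum>q\<in>P. x p * y q * (\<Sum>q'\<in>P. if comp p q' \<and> pcat p q' = r then M q q' else 0))"
proof -
  have "pm x (mp M y) r = (\<Sum>p\<in>P. \<Sum>q'\<in>P. \<Sum>q\<in>P. if comp p q' \<and> pcat p q' = r then x p * y q * M q q' else 0)"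
    unfolding mapp_def pmul_alt by (simp add: sum_distrib_left if_sum mult.assoc cong: if_cong)
  also have "\<dots> = (\<Sum>p\<in>P. \<Sum>q\<in>P. \<Sum>q'\<in>P. if comp p q' \<and> pcat p q' = r then x p * y q * M q q' else 0)"
    by (rule sum.cong[OF refl]) (rule sum.swap)
  also have "\<dots> = (\<Sum>p\<in>P. \<Sum>q\<in>P. x p * y q * (\<Sum>q'\<in>P. if comp p q' \<and> pcat p q' = r then M q q' else 0))"
    by (simp add: sum_if_mult_l)
  finally show ?thesis .
qed

lemma X3: "pm (mp M x) y r = (\<Sum>p\<in>P. \<Sum>q\<in>P. x p * y q * (\<Sum>p'\<in>P. if comp p' q \<and> pcat p' q = r then M p p' else 0))"
proof -
  have "pm (mp M x) y r = (\<Sum>p'\<in>P. \<Sum>q\<in>P. \<Sum>p\<in>P. if comp p' q \<and> pcat p' q = r then x p * y q * M p p' else 0)"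
    unfolding mapp_def pmul_alt
  proof (intro sum.cong refl)
    fix p' q
    show "(if comp p' q \<and> pcat p' q = r then (\<Sum>p\<in>P. x p * M p p') * y q else 0) =
          (\<Sum>p\<in>P. if comp p' q \<and> pcat p' q = r then x p * y q * M p p' else 0)"
      by (rule X3aux)
  qed
  also have "\<dots> = (\<Sum>q\<in>P. \<Sum>p'\<in>P. \<Sum>p\<in>P. if comp p' q \<and> pcat p' q = r then x p * y q * M p p' else 0)"
    by (rule sum.swap)
  also have "\<dots> = (\<Sum>q\<in>P. \<Sum>p\<in>P. \<Sum>p'\<in>P. if comp p' q \<and> pcat p' q = r then x p * y q * M p p' else 0)"
    by (rule sum.cong[OF refl]) (rule sum.swap)
  also have "\<dots> = (\<Sum>p\<in>P. \<Sum>q\<in>P. \<Sum>p'\<in>P. if comp p' q \<and> pcat p' q = r then x p * y q * M p p' else 0)"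
    by (rule sum.swap)
  also have "\<dots> = (\<Sum>p\<in>P. \<Sum>q\<in>P. x p * y q * (\<Sum>p'\<in>P. if comp p' q \<and> pcat p' q = r then M p p' else 0))"
    by (simp add: sum_if_mult_l)
  finally show ?thesis .
qed

lemma basis_crit:
  assumes ME: "(M :: _ \<Rightarrow> _ \<Rightarrow> 'k::field) \<in> EM" and rb: "rowB M" and d2: "D2 M"
  shows "M \<in> Dl"
proof -
  have c1: "mp M x \<in> I" if x: "x \<in> (I :: (_ \<Rightarrow> 'k) set)" for x
  proof -
    have "\<forall>r\<in>B. mp M x r = 0"
    proof
      fix r assume r: "r \<in> B"
      have H: "\<And>p. p \<in> P \<Longrightarrow> x p * M p r = 0"
        using x r rb I_iff unfolding rowB_def by (metis mult_eq_0_iff)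
      show "mp M x r = 0" unfolding mapp_def by (rule sum.neutral) (use H in blast)
    qed
    then show ?thesis using I_iff mapp_A[OF ME] by blast
  qed
  have c2: "(\<lambda>r. mp M (pm x y) r - pm x (mp M y) r - pm (mp M x) y r) \<in> I" if "x \<in> (A :: (_ \<Rightarrow> 'k) set)" "y \<in> (A :: (_ \<Rightarrow> 'k) set)" for x y
  proof -
    have inA: "(\<lambda>r. mp M (pm x y) r - pm x (mp M y) r - pm (mp M x) y r) \<in> A"
      unfolding pathalg_def mem_Collect_eq
    proof (intro allI impI)
      fix r assume r: "r \<notin> P"
      have "mp M (pm x y) r = 0" using mapp_A[OF ME] r unfolding pathalg_def by blast
      moreover have "pm x (mp M y) r = 0" using pmul_A r unfolding pathalg_def by blast
      moreover have "pm (mp M x) y r = 0" using pmul_A r unfolding pathalg_def by blast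
      ultimately show "mp M (pm x y) r - pm x (mp M y) r - pm (mp M x) y r = 0" by simp
    qed
    have "\<forall>r\<in>B. mp M (pm x y) r - pm x (mp M y) r - pm (mp M x) y r = 0"
    proof
      fix r assume r: "r \<in> B"
      have "mp M (pm x y) r - pm x (mp M y) r - pm (mp M x) y r =
        (\<Sum>p\<in>P. \<Sum>q\<in>P. x p * y q * ((if comp p q then M (pcat p q) r else 0) -
           (\<Sum>q'\<in>P. if comp p q' \<and> pcat p q' = r then M q q' else 0) -
           (\<Sum>p'\<in>P. if comp p' q \<and> pcat p' q = r then M p p' else 0)))"
        unfolding X1 X2 X3 by (simp only: right_diff_distrib sum_subtractf)
      also have "\<dots> = 0"
        using d2 r unfolding D2_def by (intro sum.neutral ballI) simp
      finally show "mp M (pm x y) r - pm x (mp M y) r - pm (mp M x) y r = 0" .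
    qed
    then show ?thesis using inA I_iff by blast
  qed
  show ?thesis unfolding der_lifts_def
  proof (intro CollectI conjI ballI)
    show "M \<in> EM" by (rule ME)
  next
    fix x assume "x \<in> (I :: (_ \<Rightarrow> 'k) set)" then show "mp M x \<in> I" by (rule c1)
  next
    fix x y assume "x \<in> (A :: (_ \<Rightarrow> 'k) set)" "y \<in> (A :: (_ \<Rightarrow> 'k) set)"
    then show "(\<lambda>r. mp M (pm x y) r - pm x (mp M y) r - pm (mp M x) y r) \<in> I" by (rule c2)
  qed
qed

definition piB :: "(('v,'a) path \<Rightarrow> ('v,'a) path \<Rightarrow> 'k::field) \<Rightarrow> (('v,'a) path \<Rightarrow> ('v,'a) path \<Rightarrow> 'k)" where
  "piB M = (\<lambda>p q. if q \<in> B then M p q else 0)"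

lemma piB_E: "M \<in> EM \<Longrightarrow> piB M \<in> EM"
  by (auto simp: piB_def endo_mats_def)

lemma piB_rowB: "rowB M \<Longrightarrow> rowB (piB M)"
  by (auto simp: piB_def rowB_def)

lemma piB_D2: assumes "D2 M" shows "D2 (piB M)"
  unfolding D2_def
proof (intro ballI)
  fix p q r assume p: "p \<in> P" and q: "q \<in> P" and r: "r \<in> B"
  have e1: "(\<Sum>q'\<in>P. if comp p q' \<and> pcat p q' = r then piB M q q' else 0) = (\<Sum>q'\<in>P. if comp p q' \<and> pcat p q' = r then M q q' else 0)"
    by (rule sum.cong) (use pcat_B p r in \<open>auto simp: piB_def\<close>)
  have e2: "(\<Sum>p'\<in>P. if comp p' q \<and> pcat p' q = r then piB M p p' else 0) = (\<Sum>p'\<in>P. if comp p' q \<and> pcat p' q = r then M p p' else 0)"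
    by (rule sum.cong) (use pcat_B q r in \<open>auto simp: piB_def\<close>)
  show "(if comp p q then piB M (pcat p q) r else 0) =
     (\<Sum>q'\<in>P. if comp p q' \<and> pcat p q' = r then piB M q q' else 0) +
     (\<Sum>p'\<in>P. if comp p' q \<and> pcat p' q = r then piB M p p' else 0)"
  proof -
    have e0: "(if comp p q then piB M (pcat p q) r else 0) = (if comp p q then M (pcat p q) r else 0)"
      using r by (simp add: piB_def)
    have eq: "(if comp p q then M (pcat p q) r else 0) =
     (\<Sum>q'\<in>P. if comp p q' \<and> pcat p q' = r then M q q' else 0) +
     (\<Sum>p'\<in>P. if comp p' q \<and> pcat p' q = r then M p p' else 0)"
      using assms p q r unfolding D2_def by blast
    show ?thesis by (simp only: e0 e1 e2 eq)
  qed
qed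

lemma piB_Dl: assumes "M \<in> Dl" shows "piB M \<in> Dl"
proof -
  have ME: "M \<in> EM" using assms by (simp add: der_lifts_def)
  show ?thesis by (rule basis_crit[OF piB_E[OF ME] piB_rowB[OF D_props(2)[OF assms]] piB_D2[OF D_props(1)[OF assms]]])
qed

end


lemma if_diff0: "(if c then a - b else 0) = (if c then a else 0) - (if c then b else (0::'k::field))"
  by simp

context mq begin

definition Ad :: "(('v,'a) path \<Rightarrow> 'k::field) \<Rightarrow> (('v,'a) path \<Rightarrow> ('v,'a) path \<Rightarrow> 'k)" where
  "Ad c = (\<lambda>p q. if p \<in> P then pm c (delta p) q - pm (delta p) c q else 0)"

lemma Ad_E: "Ad c \<in> EM"
  unfolding endo_mats_def mem_Collect_eq
proof (intro allI impI)
  fix p q :: "('v,'a) path" assume "p \<notin> P \<or> q \<notin> P"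
  then show "Ad c p q = 0"
  proof
    assume "q \<notin> P"
    then have "pm c (delta p) q = 0" "pm (delta p) c q = 0" using pmul_A unfolding pathalg_def by blast+
    then show ?thesis by (simp add: Ad_def)
  qed (simp add: Ad_def)
qed

lemma pm_expand_r: "pm c x r = (\<Sum>q\<in>P. x q * pm c (delta q) r)"
proof -
  have "(\<Sum>q\<in>P. x q * pm c (delta q) r) = (\<Sum>q\<in>P. \<Sum>p\<in>P. if comp p q \<and> pcat p q = r then c p * x q else 0)"
    by (rule sum.cong[OF refl]) (simp add: pmul_delta_r sum_if_mult_l mult.commute cong: if_cong)
  also have "\<dots> = (\<Sum>p\<in>P. \<Sum>q\<in>P. if comp p q \<and> pcat p q = r then c p * x q else 0)"
    by (rule sum.swap)
  finally show ?thesis by (simp add: pmul_alt)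
qed

lemma pm_expand_l: "pm x c r = (\<Sum>p\<in>P. x p * pm (delta p) c r)"
proof -
  have "(\<Sum>p\<in>P. x p * pm (delta p) c r) = (\<Sum>p\<in>P. \<Sum>q\<in>P. if comp p q \<and> pcat p q = r then x p * c q else 0)"
    by (rule sum.cong[OF refl]) (simp add: pmul_delta_l sum_if_mult_l)
  then show ?thesis by (simp add: pmul_alt[of x c r])
qed

lemma mapp_Ad: "mp (Ad c) x = (\<lambda>r. pm c x r - pm x c r)"
proof
  fix r
  have "mp (Ad c) x r = (\<Sum>p\<in>P. x p * pm c (delta p) r - x p * pm (delta p) c r)"
    unfolding mapp_def by (rule sum.cong) (simp_all add: Ad_def right_diff_distrib)
  also have "\<dots> = pm c x r - pm x c r"
    by (simp add: sum_subtractf pm_expand_r[of c x r] pm_expand_l[of x c r])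
  finally show "mp (Ad c) x r = pm c x r - pm x c r" .
qed

lemma Ad_Nl: assumes c: "c \<in> A" shows "Ad c \<in> Nl"
  unfolding inn_lifts_def
proof (intro CollectI conjI)
  show "Ad c \<in> EM" by (rule Ad_E)
  show "\<exists>c'\<in>A. \<forall>x\<in>A. (\<lambda>r. mp (Ad c) x r - (pm c' x r - pm x c' r)) \<in> I"
  proof (intro bexI[OF _ c] ballI)
    fix x
    have "(\<lambda>r. mp (Ad c) x r - (pm c x r - pm x c r)) = (\<lambda>_. 0)" by (simp add: mapp_Ad)
    then show "(\<lambda>r. mp (Ad c) x r - (pm c x r - pm x c r)) \<in> I" by (simp add: gen_ideal.zero)
  qed
qed

lemma Nl_piB: assumes M: "(M :: _ \<Rightarrow> _ \<Rightarrow> 'k::field) \<in> Nl" shows "\<exists>c\<in>(A :: (_ \<Rightarrow> 'k) set). piB M = piB (Ad c)"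
proof -
  have ME: "M \<in> EM" using M by (simp add: inn_lifts_def)
  obtain c where c: "c \<in> (A :: (_ \<Rightarrow> 'k) set)" and cx: "\<And>x. x \<in> (A :: (_ \<Rightarrow> 'k) set) \<Longrightarrow> (\<lambda>r. mp M x r - (pm c x r - pm x c r)) \<in> I"
    using M unfolding inn_lifts_def by blast
  have "piB M p r = piB (Ad c) p r" for p r
  proof (cases "p \<in> P \<and> r \<in> B")
    case True
    then have "(\<lambda>r. mp M (delta p) r - (pm c (delta p) r - pm (delta p) c r)) \<in> I"
      using cx delta_A by blast
    then have "mp M (delta p) r - (pm c (delta p) r - pm (delta p) c r) = 0"
      using True unfolding I_iff by blast
    then show ?thesis using True by (simp add: piB_def Ad_def mapp_delta)
  next
    case False
    then have "p \<notin> P \<or> r \<notin> B" by blast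
    then show ?thesis
    proof (elim disjE)
      assume np: "\<not> p \<in> P"
      then have "M p r = 0" using ME unfolding endo_mats_def by blast
      then show ?thesis using np by (simp add: piB_def Ad_def)
    next
      assume "\<not> r \<in> B" then show ?thesis by (simp add: piB_def)
    qed
  qed
  then show ?thesis using c by blast
qed

lemma gen_coll:
  assumes "\<And>x. x \<in> P \<Longrightarrow> K x \<Longrightarrow> g x \<in> P"
  shows "(\<Sum>y\<in>P. if Ay y then (\<Sum>x\<in>P. if K x \<and> g x = y then c x else 0) else 0)
       = (\<Sum>x\<in>P. if K x \<and> Ay (g x) then c x else (0::'k::field))"
proof -
  have "(\<Sum>y\<in>P. if Ay y then (\<Sum>x\<in>P. if K x \<and> g x = y then c x else 0) else 0)
      = (\<Sum>y\<in>P. \<Sum>x\<in>P. if K x \<and> y = g x \<and> Ay y then c x else 0)"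
    by (rule sum.cong[OF refl]) (auto simp: if_sum intro!: sum.cong)
  also have "\<dots> = (\<Sum>x\<in>P. \<Sum>y\<in>P. if K x \<and> y = g x \<and> Ay y then c x else 0)"
    by (rule sum.swap)
  also have "\<dots> = (\<Sum>x\<in>P. if K x \<and> Ay (g x) then c x else 0)"
    by (rule sum.cong[OF refl], rule sum_collapse[OF finite_P]) (use assms in blast)
  finally show ?thesis .
qed

lemma pcat_assoc: "pcat (pcat p x) q = pcat p (pcat x q)"
  by (simp add: pcat_def)

lemma Ad_D2: "D2 (Ad (c :: _ \<Rightarrow> 'k::field))"
  unfolding D2_def
proof (intro ballI)
  fix p q r assume p: "p \<in> P" and q: "q \<in> P" and r: "r \<in> B"
  define T where "T \<alpha> = (\<Sum>x\<in>P. if \<alpha> x then c x else 0)" for \<alpha>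
  have ca: "(\<Sum>q'\<in>P. if comp p q' \<and> pcat p q' = r then pm c (delta q) q' else 0)
     = T (\<lambda>x. comp p x \<and> comp x q \<and> pcat (pcat p x) q = r)"
    unfolding pmul_delta_r[OF q] T_def
    by (subst gen_coll) (auto simp: pcat_P psrc_pcat pcat_assoc p q intro!: sum.cong)
  have cb: "(\<Sum>q'\<in>P. if comp p q' \<and> pcat p q' = r then pm (delta q) c q' else 0)
     = T (\<lambda>x. comp q x \<and> comp p q \<and> pcat (pcat p q) x = r)"
    unfolding pmul_delta_l[OF q] T_def
    by (subst gen_coll) (auto simp: pcat_P psrc_pcat pcat_assoc p q intro!: sum.cong)
  have cc: "(\<Sum>p'\<in>P. if comp p' q \<and> pcat p' q = r then pm c (delta p) p' else 0)
     = T (\<lambda>x. comp x p \<and> comp p q \<and> pcat (pcat x p) q = r)"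
    unfolding pmul_delta_r[OF p] T_def
    by (subst gen_coll) (auto simp: pcat_P ptgt_pcat p q intro!: sum.cong)
  have cd: "(\<Sum>p'\<in>P. if comp p' q \<and> pcat p' q = r then pm (delta p) c p' else 0)
     = T (\<lambda>x. comp p x \<and> comp x q \<and> pcat (pcat p x) q = r)"
    unfolding pmul_delta_l[OF p] T_def
    by (subst gen_coll) (auto simp: pcat_P ptgt_pcat p q intro!: sum.cong)
  have R1: "(\<Sum>q'\<in>P. if comp p q' \<and> pcat p q' = r then Ad c q q' else 0)
      = T (\<lambda>x. comp p x \<and> comp x q \<and> pcat (pcat p x) q = r) - T (\<lambda>x. comp q x \<and> comp p q \<and> pcat (pcat p q) x = r)"
    unfolding ca[symmetric] cb[symmetric] sum_subtractf[symmetric] by (rule sum.cong) (simp_all add: Ad_def q)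
  have R2: "(\<Sum>p'\<in>P. if comp p' q \<and> pcat p' q = r then Ad c p p' else 0)
      = T (\<lambda>x. comp x p \<and> comp p q \<and> pcat (pcat x p) q = r) - T (\<lambda>x. comp p x \<and> comp x q \<and> pcat (pcat p x) q = r)"
    unfolding cc[symmetric] cd[symmetric] sum_subtractf[symmetric] by (rule sum.cong) (simp_all add: Ad_def p)
  show "(if comp p q then Ad c (pcat p q) r else 0) =
     (\<Sum>q'\<in>P. if comp p q' \<and> pcat p q' = r then Ad c q q' else 0) +
     (\<Sum>p'\<in>P. if comp p' q \<and> pcat p' q = r then Ad c p p' else 0)"
  proof (cases "comp p q")
    case True
    have pq: "pcat p q \<in> P" using pcat_P p q True by blast
    have l1: "pm c (delta (pcat p q)) r = T (\<lambda>x. comp x p \<and> comp p q \<and> pcat (pcat x p) q = r)"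
      unfolding pmul_delta_r[OF pq] T_def
      by (rule sum.cong) (auto simp: psrc_pcat pcat_assoc True)
    have l2: "pm (delta (pcat p q)) c r = T (\<lambda>x. comp q x \<and> comp p q \<and> pcat (pcat p q) x = r)"
      unfolding pmul_delta_l[OF pq] T_def
      by (rule sum.cong) (auto simp: ptgt_pcat True)
    show ?thesis unfolding R1 R2 using True pq by (simp add: Ad_def l1 l2)
  next
    case False
    have "T (\<lambda>x. comp q x \<and> comp p q \<and> pcat (pcat p q) x = r) = 0"
      "T (\<lambda>x. comp x p \<and> comp p q \<and> pcat (pcat x p) q = r) = 0"
      using False by (simp_all add: T_def)
    then show ?thesis unfolding R1 R2 using False by simp
  qed
qed

lemma Ad_rowB: "rowB (Ad (c :: _ \<Rightarrow> 'k::field))"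
  unfolding rowB_def
proof (intro allI impI)
  fix p r assume p: "p \<notin> B" and r: "r \<in> B"
  show "Ad c p r = 0"
  proof (cases "p \<in> P")
    case True
    have "pm c (delta p) r = 0" unfolding pmul_delta_r[OF True]
    proof (rule sum.neutral, intro ballI)
      fix x assume x: "x \<in> P"
      have "\<not> (comp x p \<and> pcat x p = r)"
      proof
        assume h: "comp x p \<and> pcat x p = r"
        then have "pcat x p \<in> B" using r by simp
        then show False using pcat_B[OF x True] h p by blast
      qed
      then show "(if comp x p \<and> pcat x p = r then c x else 0) = 0" by (simp only: if_False)
    qed
    moreover have "pm (delta p) c r = 0" unfolding pmul_delta_l[OF True]
    proof (rule sum.neutral, intro ballI)
      fix x assume x: "x \<in> P"
      have "\<not> (comp p x \<and> pcat p x = r)"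
      proof
        assume h: "comp p x \<and> pcat p x = r"
        then have "pcat p x \<in> B" using r by simp
        then show False using pcat_B[OF True x] h p by blast
      qed
      then show "(if comp p x \<and> pcat p x = r then c x else 0) = 0" by (simp only: if_False)
    qed
    ultimately show ?thesis by (simp add: Ad_def)
  qed (simp add: Ad_def)
qed

lemma Ad_Dl: "Ad (c :: _ \<Rightarrow> 'k::field) \<in> Dl"
  by (rule basis_crit[OF Ad_E Ad_rowB Ad_D2])

end


context mq begin

definition rho :: "(('v,'a) path \<Rightarrow> ('v,'a) path \<Rightarrow> 'k::field) \<Rightarrow> (('v,'a) path \<Rightarrow> ('v,'a) path \<Rightarrow> 'k)" where
  "rho M = (\<lambda>p q. if snd p = [] then M p q else 0)"

lemma ev_P: "w \<in> Q0 \<Longrightarrow> (w, []) \<in> P" by (simp add: inP)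

lemma sum_ev_l:
  assumes r: "r \<in> P"
  shows "(\<Sum>q'\<in>P. if comp (u, []) q' \<and> pcat (u, []) q' = r then f q' else 0) = (if psrc r = u then f r else (0::'k::field))"
proof -
  have "(\<Sum>q'\<in>P. if comp (u, []) q' \<and> pcat (u, []) q' = r then f q' else 0)
      = (\<Sum>q'\<in>P. if q' = r then (if psrc r = u then f r else 0) else 0)"
    by (rule sum.cong) (auto simp: ptgt_def psrc_def pcat_def prod_eq_iff)
  also have "\<dots> = (if psrc r = u then f r else 0)" using r by (simp add: finite_P)
  finally show ?thesis .
qed

lemma sum_ev_r:
  assumes r: "r \<in> P"
  shows "(\<Sum>p'\<in>P. if comp p' (v, []) \<and> pcat p' (v, []) = r then f p' else 0) = (if ptgt t r = v then f r else (0::'k::field))"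
proof -
  have "(\<Sum>p'\<in>P. if comp p' (v, []) \<and> pcat p' (v, []) = r then f p' else 0)
      = (\<Sum>p'\<in>P. if p' = r then (if ptgt t r = v then f r else 0) else 0)"
    by (rule sum.cong) (auto simp: psrc_def pcat_def)
  also have "\<dots> = (if ptgt t r = v then f r else 0)" using r by (simp add: finite_P)
  finally show ?thesis .
qed

lemma pm_ev_r: "w \<in> Q0 \<Longrightarrow> r \<in> P \<Longrightarrow> pm c (delta (w, [])) r = (if ptgt t r = w then c r else 0)"
  using sum_ev_r[of r w c] by (simp add: pmul_delta_r ev_P)

lemma pm_ev_l: "w \<in> Q0 \<Longrightarrow> r \<in> P \<Longrightarrow> pm (delta (w, [])) c r = (if psrc r = w then c r else 0)"
  using sum_ev_l[of r w c] by (simp add: pmul_delta_l ev_P)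

lemma D2_ev:
  assumes d: "D2 (M :: _ \<Rightarrow> _ \<Rightarrow> 'k::field)" and u: "u \<in> Q0" and v: "v \<in> Q0" and r: "r \<in> B"
  shows "(if u = v then M (u, []) r else 0) = (if psrc r = u then M (v, []) r else 0) + (if ptgt t r = v then M (u, []) r else 0)"
proof -
  have rP: "r \<in> P" using r B_P by blast
  have "(if comp (u, []) (v, []) then M (pcat (u, []) (v, [])) r else 0) =
     (\<Sum>q'\<in>P. if comp (u, []) q' \<and> pcat (u, []) q' = r then M (v, []) q' else 0) +
     (\<Sum>p'\<in>P. if comp p' (v, []) \<and> pcat p' (v, []) = r then M (u, []) p' else 0)"
    using d ev_P[OF u] ev_P[OF v] r unfolding D2_def by blast
  also have "\<dots> = (if psrc r = u then M (v, []) r else 0) + (if ptgt t r = v then M (u, []) r else 0)"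
    by (simp only: sum_ev_l[OF rP] sum_ev_r[OF rP])
  finally have calc: "(if comp (u, []) (v, []) then M (pcat (u, []) (v, [])) r else 0) =
     (if psrc r = u then M (v, []) r else 0) + (if ptgt t r = v then M (u, []) r else 0)" .
  have eq0: "(if comp (u, []) (v, []) then M (pcat (u, []) (v, [])) r else 0) = (if u = v then M (u, []) r else 0)"
    by (simp add: ptgt_def psrc_def pcat_def)
  show ?thesis by (rule trans[OF eq0[symmetric] calc])
qed

lemma piB_idem: "piB (piB M) = piB M" by (simp add: piB_def fun_eq_iff)

lemma rho_DB:
  assumes M: "(M :: _ \<Rightarrow> _ \<Rightarrow> 'k::field) \<in> Dl" and MM: "piB M = M"
  shows "\<exists>c\<in>(A :: (_ \<Rightarrow> 'k) set). rho M = rho (piB (Ad c))"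
proof -
  have ME: "M \<in> EM" using M by (simp add: der_lifts_def)
  have d: "D2 M" using D_props[OF M] by blast
  define c :: "_ \<Rightarrow> 'k" where "c r = (if r \<in> B then M (ptgt t r, []) r else 0)" for r
  have cA: "c \<in> A" using B_P by (auto simp: c_def pathalg_def)
  have key: "M (w, []) r = (if ptgt t r = w then c r else 0) - (if psrc r = w then c r else 0)"
    if w: "w \<in> Q0" and r: "r \<in> B" for w r
  proof -
    have rP: "r \<in> P" using r B_P by blast
    have u0: "psrc r \<in> Q0" using rP by (simp add: inP' psrc_def)
    have t0: "ptgt t r \<in> Q0" using rP ptgt_Q0 by blast
    have cr: "c r = M (ptgt t r, []) r" using r by (simp add: c_def)
    have i: "M (w, []) r = (if psrc r = w then M (w, []) r else 0) + (if ptgt t r = w then M (w, []) r else 0)"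
      using D2_ev[OF d w w r] by simp
    show ?thesis
    proof (cases "snd r = []")
      case True
      then have st: "psrc r = ptgt t r" by (simp add: ptgt_def psrc_def)
      show ?thesis
      proof (cases "psrc r = w")
        case True
        have tw: "ptgt t r = w" using True st by simp
        have h: "M (w, []) r = M (w, []) r + M (w, []) r" using i by (simp only: True tw if_True simp_thms)
        then have "M (w, []) r = 0" by (simp only: add_cancel_right_right)
        then show ?thesis using True st cr by simp
      next
        case False
        then have "M (w, []) r = 0" using i st by simp
        then show ?thesis using False st by simp
      qed
    next
      case False
      then have st: "psrc r \<noteq> ptgt t r" using acyc[of "fst r" "snd r"] rP by (cases r) (auto simp: psrc_def)
      show ?thesis
      proof (cases "w = ptgt t r")
        case True
        then show ?thesis using st cr by auto
      next
        case wt: False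
        show ?thesis
        proof (cases "w = psrc r")
          case True
          have ii: "(if w = ptgt t r then M (w, []) r else 0) = (if psrc r = w then M (ptgt t r, []) r else 0) + (if ptgt t r = ptgt t r then M (w, []) r else 0)"
            using D2_ev[OF d w t0 r] .
          then have "M (w, []) r = - M (ptgt t r, []) r" using wt True by (simp add: eq_neg_iff_add_eq_0 add.commute)
          then show ?thesis using True st cr by simp
        next
          case False
          then have "M (w, []) r = 0" using i wt by auto
          then show ?thesis using False wt by auto
        qed
      qed
    qed
  qed
  have "rho M = rho (piB (Ad c))"
  proof (intro ext)
    fix p q
    show "rho M p q = rho (piB (Ad c)) p q"
    proof (cases "snd p = []")
      case True
      obtain w where pw: "p = (w, [])" using True by (cases p) auto
      show ?thesis
      proof (cases "w \<in> Q0")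
        case False
        then have "p \<notin> P" using pw by (simp add: inP)
        then have "M p q = 0" using ME unfolding endo_mats_def by blast
        then show ?thesis using \<open>p \<notin> P\<close> by (simp add: rho_def piB_def Ad_def)
      next
        case w: True
        show ?thesis
        proof (cases "q \<in> B")
          case False
          have "M p q = piB M p q" using MM by simp
          then show ?thesis using False by (simp add: rho_def piB_def)
        next
          case q: True
          have qP: "q \<in> P" using q B_P by blast
          have "Ad c p q = (if ptgt t q = w then c q else 0) - (if psrc q = w then c q else 0)"
            using pw ev_P[OF w] by (simp add: Ad_def pm_ev_r[OF w qP] pm_ev_l[OF w qP])
          then show ?thesis using key[OF w q] pw q True by (simp add: rho_def piB_def)
        qed
      qed
    next
      case False then show ?thesis by (simp add: rho_def)
    qed
  qed
  then show ?thesis using cA by blast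
qed

end


context mq begin

definition der0 :: "(('v,'a) path \<Rightarrow> ('v,'a) path \<Rightarrow> 'k::field) \<Rightarrow> bool" where
  "der0 M \<longleftrightarrow> M \<in> Dl \<and> piB M = M \<and> rho M = (\<lambda>_ _. 0)"

lemma der0_D2: "der0 M \<Longrightarrow> D2 M" using D_props by (auto simp: der0_def)
lemma der0_rowB: "der0 M \<Longrightarrow> rowB M" using D_props by (auto simp: der0_def)
lemma der0_E: "der0 M \<Longrightarrow> M \<in> EM" by (auto simp: der0_def der_lifts_def)
lemma der0_col: "der0 M \<Longrightarrow> r \<notin> B \<Longrightarrow> M p r = 0"
  unfolding der0_def by (metis piB_def)
lemma der0_vtx: "der0 M \<Longrightarrow> M (w, []) r = 0"
  unfolding der0_def rho_def by (metis snd_conv)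
lemma der0_row: "der0 M \<Longrightarrow> p \<notin> P \<Longrightarrow> M p r = 0"
  using der0_E unfolding endo_mats_def by blast

lemma arr_comp: "a \<in> Q1 \<Longrightarrow> comp (s a, []) (arr a)" by (simp add: arr_def ptgt_def psrc_def)

lemma der0_par:
  assumes M: "der0 (M :: _ \<Rightarrow> _ \<Rightarrow> 'k::field)" and a: "a \<in> Q1" and ne: "M (arr a) e \<noteq> 0"
  shows "e \<in> B" "psrc e = s a" "ptgt t e = t a"
proof -
  show eB: "e \<in> B" using der0_col[OF M] ne by blast
  have eP: "e \<in> P" using eB B_P by blast
  have d: "D2 M" by (rule der0_D2[OF M])
  have sa: "s a \<in> Q0" "t a \<in> Q0" using st_Q0 a by auto
  have aP: "arr a \<in> P" using arr_P a by blast
  have "(if comp (s a, []) (arr a) then M (pcat (s a, []) (arr a)) e else 0) =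
     (\<Sum>q'\<in>P. if comp (s a, []) q' \<and> pcat (s a, []) q' = e then M (arr a) q' else 0) +
     (\<Sum>p'\<in>P. if comp p' (arr a) \<and> pcat p' (arr a) = e then M (s a, []) p' else 0)"
    using d ev_P[OF sa(1)] aP eB unfolding D2_def by blast
  moreover have "(if comp (s a, []) (arr a) then M (pcat (s a, []) (arr a)) e else 0) = M (arr a) e"
    by (simp add: arr_def ptgt_def psrc_def pcat_def)
  moreover have "(\<Sum>p'\<in>P. if comp p' (arr a) \<and> pcat p' (arr a) = e then M (s a, []) p' else 0) = 0"
    by (simp add: der0_vtx[OF M] cong: if_cong)
  ultimately have "M (arr a) e = (if psrc e = s a then M (arr a) e else 0)"
    by (simp only: sum_ev_l[OF eP] add_0_right)
  then show "psrc e = s a" using ne by (metis)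
  have "(if comp (arr a) (t a, []) then M (pcat (arr a) (t a, [])) e else 0) =
     (\<Sum>q'\<in>P. if comp (arr a) q' \<and> pcat (arr a) q' = e then M (t a, []) q' else 0) +
     (\<Sum>p'\<in>P. if comp p' (t a, []) \<and> pcat p' (t a, []) = e then M (arr a) p' else 0)"
    using d ev_P[OF sa(2)] aP eB unfolding D2_def by blast
  moreover have "(if comp (arr a) (t a, []) then M (pcat (arr a) (t a, [])) e else 0) = M (arr a) e"
    by (simp add: arr_def ptgt_def psrc_def pcat_def)
  moreover have "(\<Sum>q'\<in>P. if comp (arr a) q' \<and> pcat (arr a) q' = e then M (t a, []) q' else 0) = 0"
    by (simp add: der0_vtx[OF M] cong: if_cong)
  ultimately have "M (arr a) e = (if ptgt t e = t a then M (arr a) e else 0)"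
    by (simp only: sum_ev_r[OF eP] add_0_left)
  then show "ptgt t e = t a" using ne by (metis)
qed

lemma not_glued: "\<not> glued s t a e \<Longrightarrow> snd e \<noteq> [] \<Longrightarrow> hd (snd e) \<noteq> a \<and> last (snd e) \<noteq> a"
  by (simp add: glued_def)

lemma vertex_not_par: "a \<in> Q1 \<Longrightarrow> psrc e = s a \<Longrightarrow> ptgt t e = t a \<Longrightarrow> snd e \<noteq> []"
  using loopfree by (auto simp: ptgt_def psrc_def)

lemma value_lemma:
  assumes M: "der0 (M :: _ \<Rightarrow> _ \<Rightarrow> 'k::field)" and a: "a \<in> Q1" and eP: "e \<in> P"
    and es: "psrc e = s a" and et: "ptgt t e = t a" and ng: "\<not> glued s t a e"
  shows "(v, xs @ a # ys) \<in> P \<Longrightarrow> (v, xs @ snd e @ ys) \<in> B \<Longrightarrow> M (v, xs @ a # ys) (v, xs @ snd e @ ys) = M (arr a) e"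
proof (induction ys rule: rev_induct)
  have ene: "snd e \<noteq> []" using vertex_not_par[OF a es et] .
  have hd: "hd (snd e) \<noteq> a" and last: "last (snd e) \<noteq> a" using not_glued[OF ng ene] by auto
  have d: "D2 M" by (rule der0_D2[OF M])
  {
  case Nil
  let ?pa = "(v, xs)" and ?r = "(v, xs @ snd e)"
  have pP: "(v, xs @ [a]) \<in> P" using Nil by simp
  have h: "?pa \<in> P \<and> (ptgt t ?pa, [a]) \<in> P" by (rule P_split[THEN iffD1, OF pP])
  have p0: "?pa \<in> P" using h by (rule conjunct1)
  have ap: "(ptgt t ?pa, [a]) \<in> P" using h by (rule conjunct2)
  have c0: "comp ?pa (arr a)" using ap by (simp add: inP arr_def psrc_def)
  have aP: "arr a \<in> P" using arr_P a by blast
  have rB: "?r \<in> B" using Nil by simp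
  have "(if comp ?pa (arr a) then M (pcat ?pa (arr a)) ?r else 0) =
     (\<Sum>q'\<in>P. if comp ?pa q' \<and> pcat ?pa q' = ?r then M (arr a) q' else 0) +
     (\<Sum>p'\<in>P. if comp p' (arr a) \<and> pcat p' (arr a) = ?r then M ?pa p' else 0)"
    using d p0 aP rB unfolding D2_def by blast
  moreover have "(if comp ?pa (arr a) then M (pcat ?pa (arr a)) ?r else 0) = M (v, xs @ [a]) ?r"
    using c0 by (simp add: pcat_def arr_def)
  moreover have "(\<Sum>q'\<in>P. if comp ?pa q' \<and> pcat ?pa q' = ?r then M (arr a) q' else 0) = M (arr a) e"
  proof -
    have "(\<Sum>q'\<in>P. if comp ?pa q' \<and> pcat ?pa q' = ?r then M (arr a) q' else 0)
        = (\<Sum>q'\<in>P. if q' = e then M (arr a) e else 0)"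
    proof (rule sum.cong[OF refl])
      fix q' assume "q' \<in> P"
      have "comp ?pa q' \<and> pcat ?pa q' = ?r \<longleftrightarrow> q' = e"
        using c0 es by (cases q', cases e) (auto simp: pcat_def psrc_def arr_def)
      then show "(if comp ?pa q' \<and> pcat ?pa q' = ?r then M (arr a) q' else 0) = (if q' = e then M (arr a) e else 0)"
        by auto
    qed
    also have "\<dots> = M (arr a) e" using eP by (simp add: finite_P)
    finally show ?thesis .
  qed
  moreover have "(\<Sum>p'\<in>P. if comp p' (arr a) \<and> pcat p' (arr a) = ?r then M ?pa p' else 0) = 0"
  proof (rule sum.neutral, intro ballI)
    fix p' assume "p' \<in> P"
    have "\<not> (pcat p' (arr a) = ?r)"
    proof
      assume "pcat p' (arr a) = ?r"
      then have "snd p' @ [a] = xs @ snd e" by (simp add: pcat_def arr_def)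
      then have "last (snd p' @ [a]) = last (xs @ snd e)" by (rule arg_cong)
      then have "last (snd e) = a" using ene by simp
      then show False using last by simp
    qed
    then show "(if comp p' (arr a) \<and> pcat p' (arr a) = ?r then M ?pa p' else 0) = 0" by simp
  qed
  ultimately show ?case by simp
next
  case (snoc b ys')
  let ?pa = "(v, xs @ a # ys')" and ?ra = "(v, xs @ snd e @ ys')"
  let ?p = "(v, xs @ a # ys' @ [b])" and ?r = "(v, xs @ snd e @ ys' @ [b])"
  have pP: "(v, (xs @ a # ys') @ [b]) \<in> P" using snoc.prems by simp
  have h: "?pa \<in> P \<and> (ptgt t ?pa, [b]) \<in> P" by (rule P_split[THEN iffD1, OF pP])
  have p0: "?pa \<in> P" using h by (rule conjunct1)
  have bp: "(ptgt t ?pa, [b]) \<in> P" using h by (rule conjunct2)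
  have b: "b \<in> Q1" and c0: "comp ?pa (arr b)" using bp by (simp_all add: inP arr_def psrc_def)
  have bP: "arr b \<in> P" using arr_P b by blast
  have rB: "?r \<in> B" using snoc.prems by simp
  have rB': "(v, (xs @ snd e @ ys') @ [b]) \<in> B" using rB by simp
  have h2: "?ra \<in> B \<and> (ptgt t ?ra, [b]) \<in> B" by (rule B_split[OF rB'])
  have r0: "?ra \<in> B" using h2 by (rule conjunct1)
  have rb: "(ptgt t ?ra, [b]) \<in> B" using h2 by (rule conjunct2)
  have rbP: "(ptgt t ?ra, [b]) \<in> P" using rb by (rule B_P)
  have cr0: "comp ?ra (arr b)" using rbP by (simp add: inP arr_def psrc_def)
  have IH: "M ?pa ?ra = M (arr a) e" using snoc.IH p0 r0 by blast
  have "(if comp ?pa (arr b) then M (pcat ?pa (arr b)) ?r else 0) =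
     (\<Sum>q'\<in>P. if comp ?pa q' \<and> pcat ?pa q' = ?r then M (arr b) q' else 0) +
     (\<Sum>p'\<in>P. if comp p' (arr b) \<and> pcat p' (arr b) = ?r then M ?pa p' else 0)"
    using d p0 bP rB unfolding D2_def by blast
  moreover have "(if comp ?pa (arr b) then M (pcat ?pa (arr b)) ?r else 0) = M ?p ?r"
    using c0 by (simp add: pcat_def arr_def)
  moreover have "(\<Sum>q'\<in>P. if comp ?pa q' \<and> pcat ?pa q' = ?r then M (arr b) q' else 0) = 0"
  proof (rule sum.neutral, intro ballI)
    fix q' assume q': "q' \<in> P"
    show "(if comp ?pa q' \<and> pcat ?pa q' = ?r then M (arr b) q' else 0) = 0"
    proof (cases "M (arr b) q' = 0")
      case False
      have qs: "psrc q' = s b" and qt: "ptgt t q' = t b" using der0_par[OF M b False] by auto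
      have qne: "snd q' \<noteq> []" using vertex_not_par[OF b qs qt] .
      have "\<not> (pcat ?pa q' = ?r)"
      proof
        assume "pcat ?pa q' = ?r"
        then have "a # ys' @ snd q' = snd e @ ys' @ [b]" by (simp add: pcat_def)
        then have "hd (a # ys' @ snd q') = hd (snd e @ ys' @ [b])" by (rule arg_cong)
        then have "hd (snd e) = a" using ene by simp
        then show False using hd by simp
      qed
      then show ?thesis by simp
    qed simp
  qed
  moreover have "(\<Sum>p'\<in>P. if comp p' (arr b) \<and> pcat p' (arr b) = ?r then M ?pa p' else 0) = M ?pa ?ra"
  proof -
    have "(\<Sum>p'\<in>P. if comp p' (arr b) \<and> pcat p' (arr b) = ?r then M ?pa p' else 0)
        = (\<Sum>p'\<in>P. if p' = ?ra then M ?pa ?ra else 0)"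
    proof (rule sum.cong[OF refl])
      fix p' assume "p' \<in> P"
      have "comp p' (arr b) \<and> pcat p' (arr b) = ?r \<longleftrightarrow> p' = ?ra"
        using cr0 by (cases p') (auto simp: pcat_def arr_def)
      then show "(if comp p' (arr b) \<and> pcat p' (arr b) = ?r then M ?pa p' else 0) = (if p' = ?ra then M ?pa ?ra else 0)"
        by auto
    qed
    also have "\<dots> = M ?pa ?ra" using r0 B_P by (simp add: finite_P)
    finally show ?thesis .
  qed
  ultimately show ?case using IH by simp
  }
qed

lemma der0_effective:
  assumes M: "der0 (M :: _ \<Rightarrow> _ \<Rightarrow> 'k::field)" and pp: "(a, e) \<in> parallel_pairs Q0 Q1 s t B"
    and ef: "effective Q0 Q1 s t Z a e"
  shows "M (arr a) e = 0"
proof -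
  have a: "a \<in> Q1" and eB: "e \<in> B" and es: "psrc e = s a" and et: "ptgt t e = t a"
    using pp by (auto simp: parallel_pairs_def)
  have eP: "e \<in> P" using eB B_P by blast
  obtain g xs ys where g: "g \<in> Z" "snd g = xs @ a # ys" and rB: "(fst g, xs @ snd e @ ys) \<in> B"
    and ng: "\<not> glued s t a e"
    using ef unfolding effective_def by blast
  have gP: "(fst g, xs @ a # ys) \<in> P" using Z_P[OF g(1)] g(2) by (metis prod.collapse)
  have gB: "(fst g, xs @ a # ys) \<notin> B"
    using g B_iff by (metis append.left_neutral append_Nil2 snd_conv)
  have "M (fst g, xs @ a # ys) (fst g, xs @ snd e @ ys) = 0"
    using der0_rowB[OF M] gB rB unfolding rowB_def by blast
  moreover have "M (fst g, xs @ a # ys) (fst g, xs @ snd e @ ys) = M (arr a) e"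
    by (rule value_lemma[OF M a eP es et ng gP rB])
  ultimately show ?thesis by simp
qed

lemma der0_zero:
  assumes M: "der0 (M :: _ \<Rightarrow> _ \<Rightarrow> 'k::field)" and z: "\<And>a e. M (arr a) e = 0"
  shows "M = (\<lambda>_ _. 0)"
proof (intro ext)
  fix p r :: "('v,'a) path"
  obtain v as where pv: "p = (v, as)" by (cases p)
  have "M (v, as) r = 0"
  proof (induction as arbitrary: r rule: rev_induct)
    case Nil then show ?case by (rule der0_vtx[OF M])
  next
    case (snoc b bs)
    show ?case
    proof (cases "(v, bs @ [b]) \<in> P \<and> r \<in> B")
      case True
      have h: "(v, bs) \<in> P \<and> (ptgt t (v, bs), [b]) \<in> P" using True by (simp only: P_split[symmetric])
      have p0: "(v, bs) \<in> P" using h by (rule conjunct1)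
      have bp: "(ptgt t (v, bs), [b]) \<in> P" using h by (rule conjunct2)
      have rB: "r \<in> B" using True by (rule conjunct2)
      have b: "b \<in> Q1" and c0: "comp (v, bs) (arr b)" using bp by (simp_all add: inP arr_def psrc_def)
      have bP: "arr b \<in> P" using arr_P b by blast
      have "(if comp (v, bs) (arr b) then M (pcat (v, bs) (arr b)) r else 0) =
         (\<Sum>q'\<in>P. if comp (v, bs) q' \<and> pcat (v, bs) q' = r then M (arr b) q' else 0) +
         (\<Sum>p'\<in>P. if comp p' (arr b) \<and> pcat p' (arr b) = r then M (v, bs) p' else 0)"
        using der0_D2[OF M] p0 bP rB unfolding D2_def by blast
      moreover have "(if comp (v, bs) (arr b) then M (pcat (v, bs) (arr b)) r else 0) = M (v, bs @ [b]) r"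
        using c0 by (simp add: pcat_def arr_def)
      ultimately show ?thesis by (simp add: z snoc.IH cong: if_cong)
    next
      case False
      then show ?thesis using der0_row[OF M] der0_col[OF M] by blast
    qed
  qed
  then show "M p r = 0" using pv by simp
qed

end


lemma split_at:
  assumes "xs1 @ ys1 = XS @ a # YS"
  shows "(\<exists>zs. xs1 = XS @ a # zs \<and> YS = zs @ ys1) \<or> (\<exists>zs. ys1 = zs @ a # YS \<and> XS = xs1 @ zs)"
proof -
  from assms obtain us where "(xs1 = XS @ us \<and> us @ ys1 = a # YS) \<or> (xs1 @ us = XS \<and> ys1 = us @ a # YS)"
    using append_eq_append_conv2[of xs1 ys1 XS "a # YS"] by blast
  then show ?thesis
  proof
    assume h: "xs1 = XS @ us \<and> us @ ys1 = a # YS"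
    show ?thesis
    proof (cases us)
      case Nil then show ?thesis using h by auto
    next
      case (Cons c us') then show ?thesis using h by auto
    qed
  next
    assume h: "xs1 @ us = XS \<and> ys1 = us @ a # YS"
    then show ?thesis by auto
  qed
qed

lemma split3:
  assumes "xs @ a # ys = u @ m @ w"
  shows "(\<exists>u'. u = xs @ a # u' \<and> ys = u' @ m @ w) \<or> (\<exists>w1. w = w1 @ a # ys \<and> xs = u @ m @ w1)
     \<or> (\<exists>z1 z2. m = z1 @ a # z2 \<and> xs = u @ z1 \<and> ys = z2 @ w)"
proof -
  have "u @ (m @ w) = xs @ a # ys" using assms by simp
  from split_at[OF this] show ?thesis
  proof
    assume "\<exists>zs. u = xs @ a # zs \<and> ys = zs @ m @ w" then show ?thesis by blast
  next
    assume "\<exists>zs. m @ w = zs @ a # ys \<and> xs = u @ zs"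
    then obtain zs where zs: "m @ w = zs @ a # ys" "xs = u @ zs" by blast
    from split_at[OF zs(1)] show ?thesis
    proof
      assume "\<exists>zs'. m = zs @ a # zs' \<and> ys = zs' @ w" then show ?thesis using zs(2) by blast
    next
      assume "\<exists>zs'. w = zs' @ a # ys \<and> zs = m @ zs'" then show ?thesis using zs(2) by auto
    qed
  qed
qed

context mq begin

definition Rr :: "'a \<Rightarrow> ('v,'a) path \<Rightarrow> ('v,'a) path \<Rightarrow> ('v,'a) path \<Rightarrow> bool" where
  "Rr a e p r \<longleftrightarrow> (\<exists>xs ys. snd p = xs @ a # ys \<and> r = (fst p, xs @ snd e @ ys))"

definition Mae :: "'a \<Rightarrow> ('v,'a) path \<Rightarrow> (('v,'a) path \<Rightarrow> ('v,'a) path \<Rightarrow> 'k::field)" where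
  "Mae a e = (\<lambda>p r. if p \<in> B \<and> r \<in> B \<and> Rr a e p r then 1 else 0)"

lemma ne_props:
  assumes "(a, e) \<in> non_effective Q0 Q1 s t Z"
  shows "a \<in> Q1" "e \<in> B" "psrc e = s a" "ptgt t e = t a" "\<not> effective Q0 Q1 s t Z a e"
  using assms by (auto simp: non_effective_def parallel_pairs_def)

context
  fixes a e
  assumes ne: "(a, e) \<in> non_effective Q0 Q1 s t Z"
begin

lemma a_Q1: "a \<in> Q1" and eB: "e \<in> B" and es: "psrc e = s a" and et: "ptgt t e = t a"
  and nef: "\<not> effective Q0 Q1 s t Z a e"
  using ne_props[OF ne] by auto

lemma eP: "e \<in> P" using eB B_P by blast
lemma ene: "snd e \<noteq> []" using vertex_not_par[OF a_Q1 es et] .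
lemma fst_e: "fst e = s a" using es by (simp add: psrc_def)

lemma K2: assumes "(v, xs @ a # ys) \<in> P" shows "(v, xs @ snd e @ ys) \<in> P"
proof -
  have h1: "(v, xs) \<in> P" "(ptgt t (v, xs), a # ys) \<in> P" using assms P_split by blast+
  have sa: "ptgt t (v, xs) = s a" using h1(2) by (simp add: inP)
  have "(ptgt t (v, xs), [a] @ ys) \<in> P" using h1(2) by simp
  then have ty: "(t a, ys) \<in> P" using P_split[of "ptgt t (v, xs)" "[a]" ys] by (simp add: ptgt_def)
  have e1: "(ptgt t (v, xs), snd e) \<in> P" using eP sa fst_e by (metis prod.collapse)
  have e2: "ptgt t (ptgt t (v, xs), snd e) = t a" using et sa fst_e ene by (simp add: ptgt_def)
  have "(ptgt t (v, xs), snd e @ ys) \<in> P" using P_split e1 e2 ty by simp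
  then show ?thesis using P_split h1(1) by simp
qed

lemma K4: assumes "(v, xs @ a # ys) \<in> P" shows "ptgt t (v, xs @ snd e @ ys) = ptgt t (v, xs @ a # ys)"
proof (cases "ys = []")
  case True
  have "ptgt t (v, xs @ snd e) = t (last (snd e))" using ene by (simp add: ptgt_def)
  also have "\<dots> = t a" using et ene by (simp add: ptgt_def)
  finally show ?thesis using True by (simp add: ptgt_def)
qed (simp add: ptgt_def)

lemma glued_eq: assumes "glued s t a e" shows "snd e = [a]"
proof -
  have "(snd e \<noteq> [] \<and> (hd (snd e) = a \<or> last (snd e) = a)) \<or> (s a = t a \<and> snd e = [] \<and> fst e = s a)"
    using assms by (simp add: glued_def)
  then show ?thesis
  proof (elim disjE conjE)
    assume h: "snd e \<noteq> []" "hd (snd e) = a"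
    then obtain rest where "snd e = a # rest" by (cases "snd e") auto
    moreover then have "rest = []" using par_start[OF eP es et _ a_Q1] by blast
    ultimately show ?thesis by simp
  next
    assume h: "snd e \<noteq> []" "last (snd e) = a"
    then obtain rest where "snd e = rest @ [a]" by (metis append_butlast_last_id)
    moreover then have "rest = []" using par_end[OF eP es et _ a_Q1] by blast
    ultimately show ?thesis by simp
  next
    assume "s a = t a" then show ?thesis using loopfree a_Q1 by blast
  qed
qed

lemma notB_contains: "(\<exists>z\<in>Z. \<exists>u w. snd p = u @ snd z @ w) \<Longrightarrow> p \<notin> B"
  using B_iff by blast

lemma K1:
  assumes p: "p \<in> P" "p \<notin> B" and sp: "snd p = xs @ a # ys"
  shows "(fst p, xs @ snd e @ ys) \<notin> B"
proof -
  obtain z u w where z: "z \<in> Z" "snd p = u @ snd z @ w" using p B_iff by blast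
  have "xs @ a # ys = u @ snd z @ w" using sp z by simp
  from split3[OF this] show ?thesis
  proof (elim disjE exE conjE)
    fix u' assume "u = xs @ a # u'" "ys = u' @ snd z @ w"
    then have "xs @ snd e @ ys = (xs @ snd e @ u') @ snd z @ w" by simp
    then show ?thesis using z(1) notB_contains by (metis snd_conv)
  next
    fix w1 assume "w = w1 @ a # ys" "xs = u @ snd z @ w1"
    then have "xs @ snd e @ ys = u @ snd z @ (w1 @ snd e @ ys)" by simp
    then show ?thesis using z(1) notB_contains by (metis snd_conv)
  next
    fix z1 z2 assume zz: "snd z = z1 @ a # z2" "xs = u @ z1" "ys = z2 @ w"
    show ?thesis
    proof (cases "glued s t a e")
      case True
      then have "xs @ snd e @ ys = u @ snd z @ w" using glued_eq zz by simp
      then show ?thesis using z(1) notB_contains by (metis snd_conv)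
    next
      case False
      then have "\<not> (fst z, z1 @ snd e @ z2) \<in> B" using nef z(1) zz(1) unfolding effective_def by blast
      moreover have "(fst z, z1 @ snd e @ z2) \<in> P" using K2 Z_P[OF z(1)] zz(1) by (metis prod.collapse)
      ultimately obtain z' u' w' where z': "z' \<in> Z" "z1 @ snd e @ z2 = u' @ snd z' @ w'"
        using B_iff by auto
      then have "xs @ snd e @ ys = (u @ u') @ snd z' @ (w' @ w)" using zz by simp
      then show ?thesis using z'(1) notB_contains by (metis snd_conv)
    qed
  qed
qed

lemma Mae_E: "Mae a e \<in> EM"
  using B_P by (auto simp: Mae_def endo_mats_def)

lemma Mae_rowB: "rowB (Mae a e)"
  by (simp add: rowB_def Mae_def)

lemma sum_01:
  assumes "finite S" "\<And>y. y \<in> S \<Longrightarrow> f y = (if Q y then 1 else 0)"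
    "\<And>y y'. y \<in> S \<Longrightarrow> y' \<in> S \<Longrightarrow> Q y \<Longrightarrow> Q y' \<Longrightarrow> y = y'"
  shows "sum f S = (if \<exists>y\<in>S. Q y then 1 else (0::'k::field))"
proof (cases "\<exists>y\<in>S. Q y")
  case True
  then obtain y0 where y0: "y0 \<in> S" "Q y0" by blast
  have "sum f S = (\<Sum>y\<in>S. if y = y0 then 1 else 0)"
    using assms(2,3) y0 by (intro sum.cong) auto
  also have "\<dots> = 1" using y0 assms(1) by simp
  finally show ?thesis using True by simp
next
  case False
  then show ?thesis using assms(2) by (simp add: sum.neutral)
qed

lemma Mae_D2: "D2 (Mae a e :: _ \<Rightarrow> _ \<Rightarrow> 'k::field)"
  unfolding D2_def
proof (intro ballI)
  fix p q r assume p: "p \<in> P" and q: "q \<in> P" and r: "r \<in> B"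
  define S1 where "S1 \<longleftrightarrow> (\<exists>q'\<in>P. comp p q' \<and> pcat p q' = r \<and> q \<in> B \<and> q' \<in> B \<and> Rr a e q q')"
  define S2 where "S2 \<longleftrightarrow> (\<exists>p'\<in>P. comp p' q \<and> pcat p' q = r \<and> p \<in> B \<and> p' \<in> B \<and> Rr a e p p')"
  have R1: "(\<Sum>q'\<in>P. if comp p q' \<and> pcat p q' = r then (Mae a e q q' :: 'k) else 0) = (if S1 then 1 else 0)"
    unfolding S1_def
  proof (rule sum_01[OF finite_P])
    fix y assume "y \<in> P"
    show "(if comp p y \<and> pcat p y = r then Mae a e q y else 0) =
      (if comp p y \<and> pcat p y = r \<and> q \<in> B \<and> y \<in> B \<and> Rr a e q y then 1 else 0)"
      by (simp add: Mae_def)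
  next
    fix y y' assume "comp p y \<and> pcat p y = r \<and> q \<in> B \<and> y \<in> B \<and> Rr a e q y"
      "comp p y' \<and> pcat p y' = r \<and> q \<in> B \<and> y' \<in> B \<and> Rr a e q y'"
    then show "y = y'" by (cases y, cases y') (auto simp: pcat_def psrc_def)
  qed
  have R2: "(\<Sum>p'\<in>P. if comp p' q \<and> pcat p' q = r then (Mae a e p p' :: 'k) else 0) = (if S2 then 1 else 0)"
    unfolding S2_def
  proof (rule sum_01[OF finite_P])
    fix y assume "y \<in> P"
    show "(if comp y q \<and> pcat y q = r then Mae a e p y else 0) =
      (if comp y q \<and> pcat y q = r \<and> p \<in> B \<and> y \<in> B \<and> Rr a e p y then 1 else 0)"
      by (simp add: Mae_def)
  next
    fix y y' assume "comp y q \<and> pcat y q = r \<and> p \<in> B \<and> y \<in> B \<and> Rr a e p y"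
      "comp y' q \<and> pcat y' q = r \<and> p \<in> B \<and> y' \<in> B \<and> Rr a e p y'"
    then show "y = y'" by (cases y, cases y') (auto simp: pcat_def)
  qed
  show "(if comp p q then (Mae a e (pcat p q) r :: 'k) else 0) =
     (\<Sum>q'\<in>P. if comp p q' \<and> pcat p q' = r then Mae a e q q' else 0) +
     (\<Sum>p'\<in>P. if comp p' q \<and> pcat p' q = r then Mae a e p p' else 0)"
  proof (cases "comp p q")
    case False
    have "\<not> S1"
    proof
      assume S1 then obtain q' where "comp p q'" "Rr a e q q'" unfolding S1_def by blast
      then show False using False by (auto simp: Rr_def psrc_def)
    qed
    moreover have "\<not> S2"
    proof
      assume S2 then obtain p' where h: "comp p' q" "Rr a e p p'" unfolding S2_def by blast
      then obtain xs ys where "snd p = xs @ a # ys" "p' = (fst p, xs @ snd e @ ys)" unfolding Rr_def by blast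
      then have "ptgt t p' = ptgt t p" using K4[of "fst p" xs ys] p by (metis prod.collapse)
      then show False using False h(1) by simp
    qed
    ultimately show ?thesis unfolding R1 R2 using False by simp
  next
    case True
    have pq: "pcat p q \<in> P" using pcat_P p q True by blast
    have dist: "distinct (snd p @ snd q)" using P_distinct[of "fst p" "snd p @ snd q"] pq by (simp add: pcat_def)
    have n12: "\<not> (S1 \<and> S2)"
    proof
      assume "S1 \<and> S2"
      then obtain q' p' where "Rr a e q q'" "Rr a e p p'" unfolding S1_def S2_def by blast
      then have "a \<in> set (snd q)" "a \<in> set (snd p)" unfolding Rr_def by auto
      then show False using dist by auto
    qed
    have S1L: "pcat p q \<in> B \<and> Rr a e (pcat p q) r" if S1
    proof -
      from that obtain q' where q': "q' \<in> P" "comp p q'" "pcat p q' = r" "Rr a e q q'" unfolding S1_def by blast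
      then obtain xs ys where xy: "snd q = xs @ a # ys" "q' = (fst q, xs @ snd e @ ys)" unfolding Rr_def by blast
      have sp: "snd (pcat p q) = (snd p @ xs) @ a # ys" using xy by (simp add: pcat_def)
      have rr: "r = (fst (pcat p q), (snd p @ xs) @ snd e @ ys)" using q'(3) xy by (simp add: pcat_def)
      have "pcat p q \<in> B"
      proof (rule ccontr)
        assume "pcat p q \<notin> B"
        then have "(fst (pcat p q), (snd p @ xs) @ snd e @ ys) \<notin> B" using K1[OF pq _ sp] by blast
        then show False using r rr by simp
      qed
      then show ?thesis using sp rr unfolding Rr_def by blast
    qed
    have S2L: "pcat p q \<in> B \<and> Rr a e (pcat p q) r" if S2
    proof -
      from that obtain p' where p': "p' \<in> P" "comp p' q" "pcat p' q = r" "Rr a e p p'" unfolding S2_def by blast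
      then obtain xs ys where xy: "snd p = xs @ a # ys" "p' = (fst p, xs @ snd e @ ys)" unfolding Rr_def by blast
      have sp: "snd (pcat p q) = xs @ a # (ys @ snd q)" using xy by (simp add: pcat_def)
      have rr: "r = (fst (pcat p q), xs @ snd e @ (ys @ snd q))" using p'(3) xy by (simp add: pcat_def)
      have "pcat p q \<in> B"
      proof (rule ccontr)
        assume "pcat p q \<notin> B"
        then have "(fst (pcat p q), xs @ snd e @ (ys @ snd q)) \<notin> B" using K1[OF pq _ sp] by blast
        then show False using r rr by simp
      qed
      then show ?thesis using sp rr unfolding Rr_def by blast
    qed
    have LS: "S1 \<or> S2" if L: "pcat p q \<in> B" "Rr a e (pcat p q) r"
    proof -
      obtain XS YS where XY: "snd p @ snd q = XS @ a # YS" "r = (fst p, XS @ snd e @ YS)"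
        using L(2) unfolding Rr_def by (auto simp: pcat_def)
      have pB: "p \<in> B" and qB: "q \<in> B" using pcat_B[OF p q True L(1)] by auto
      from split_at[OF XY(1)] show ?thesis
      proof
        assume "\<exists>zs. snd p = XS @ a # zs \<and> YS = zs @ snd q"
        then obtain zs where zs: "snd p = XS @ a # zs" "YS = zs @ snd q" by blast
        define p' where "p' = (fst p, XS @ snd e @ zs)"
        have p'P: "p' \<in> P" using K2[of "fst p" XS zs] p zs(1) unfolding p'_def by (metis prod.collapse)
        have cp': "comp p' q" using K4[of "fst p" XS zs] p zs(1) True unfolding p'_def by (metis prod.collapse)
        have rp: "pcat p' q = r" using XY(2) zs(2) by (simp add: p'_def pcat_def)
        have p'B: "p' \<in> B" using pcat_B[OF p'P q cp'] rp r by blast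
        have "Rr a e p p'" using zs(1) unfolding Rr_def p'_def by blast
        then have S2 unfolding S2_def using p'P cp' rp pB p'B by blast
        then show ?thesis by blast
      next
        assume "\<exists>zs. snd q = zs @ a # YS \<and> XS = snd p @ zs"
        then obtain zs where zs: "snd q = zs @ a # YS" "XS = snd p @ zs" by blast
        define q' where "q' = (fst q, zs @ snd e @ YS)"
        have q'P: "q' \<in> P" using K2[of "fst q" zs YS] q zs(1) unfolding q'_def by (metis prod.collapse)
        have cq': "comp p q'" using True unfolding q'_def by (simp add: psrc_def)
        have rq: "pcat p q' = r" using XY(2) zs(2) by (simp add: q'_def pcat_def)
        have q'B: "q' \<in> B" using pcat_B[OF p q'P cq'] rq r by blast
        have "Rr a e q q'" using zs(1) unfolding Rr_def q'_def by blast
        then have S1 unfolding S1_def using q'P cq' rq qB q'B by blast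
        then show ?thesis by blast
      qed
    qed
    have "Mae a e (pcat p q) r = (if S1 \<or> S2 then 1 else (0::'k))"
      using S1L S2L LS r by (auto simp: Mae_def)
    then show ?thesis unfolding R1 R2 using True n12 by auto
  qed
qed

lemma Mae_Dl: "Mae a e \<in> (Dl :: (_ \<Rightarrow> _ \<Rightarrow> 'k::field) set)"
  by (rule basis_crit[OF Mae_E Mae_rowB Mae_D2])

lemma Mae_der0: "der0 (Mae a e :: _ \<Rightarrow> _ \<Rightarrow> 'k::field)"
  unfolding der0_def
proof (intro conjI)
  show "Mae a e \<in> Dl" by (rule Mae_Dl)
  show "piB (Mae a e) = Mae a e" by (auto simp: piB_def Mae_def fun_eq_iff)
  show "rho (Mae a e) = (\<lambda>_ _. 0 :: 'k)" by (auto simp: rho_def Mae_def Rr_def fun_eq_iff)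
qed

lemma Mae_arr: "(Mae a e (arr a') e' :: 'k::field) = (if a' = a \<and> e' = e then 1 else 0)"
proof -
  have "Rr a e (arr a') e' \<longleftrightarrow> a' = a \<and> e' = e"
  proof
    assume "Rr a e (arr a') e'"
    then obtain xs ys where "[a'] = xs @ a # ys" "e' = (s a', xs @ snd e @ ys)" unfolding Rr_def arr_def by auto
    then show "a' = a \<and> e' = e" using fst_e by (cases xs) (auto simp: prod_eq_iff)
  next
    assume "a' = a \<and> e' = e"
    then show "Rr a e (arr a') e'" unfolding Rr_def arr_def using fst_e
      by (intro exI[of _ "[]"]) (auto simp: prod_eq_iff)
  qed
  then show ?thesis using arr_B[OF a_Q1] eB by (auto simp: Mae_def)
qed

end

end


lemma vs_mat: "vector_space (mat_scale :: 'k::field \<Rightarrow> ('p \<Rightarrow> 'p \<Rightarrow> 'k) \<Rightarrow> _)"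
  by unfold_locales (auto simp: mat_scale_def fun_eq_iff algebra_simps)

lemma if_add0: "(if c then a + b else 0) = (if c then a else 0) + (if c then b else (0::'k::field))"
  by simp
lemma if_mult0: "(if c then k * a else 0) = k * (if c then a else (0::'k::field))"
  by simp

context mq begin

lemma D2_add: assumes "D2 M1" "D2 M2" shows "D2 (M1 + M2 :: _ \<Rightarrow> _ \<Rightarrow> 'k::field)"
  unfolding D2_def
proof (intro ballI)
  fix p q r assume h: "p \<in> P" "q \<in> P" "r \<in> B"
  have e1: "(if comp p q then M1 (pcat p q) r else 0) =
     (\<Sum>q'\<in>P. if comp p q' \<and> pcat p q' = r then M1 q q' else 0) +
     (\<Sum>p'\<in>P. if comp p' q \<and> pcat p' q = r then M1 p p' else 0)" using assms(1) h unfolding D2_def by blast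
  have e2: "(if comp p q then M2 (pcat p q) r else 0) =
     (\<Sum>q'\<in>P. if comp p q' \<and> pcat p q' = r then M2 q q' else 0) +
     (\<Sum>p'\<in>P. if comp p' q \<and> pcat p' q = r then M2 p p' else 0)" using assms(2) h unfolding D2_def by blast
  show "(if comp p q then (M1 + M2) (pcat p q) r else 0) =
     (\<Sum>q'\<in>P. if comp p q' \<and> pcat p q' = r then (M1 + M2) q q' else 0) +
     (\<Sum>p'\<in>P. if comp p' q \<and> pcat p' q = r then (M1 + M2) p p' else 0)"
    unfolding plus_fun_apply if_add0 sum.distrib e1 e2 by (simp only: ac_simps)
qed

lemma D2_scale: assumes "D2 M" shows "D2 (mat_scale k M :: _ \<Rightarrow> _ \<Rightarrow> 'k::field)"
  unfolding D2_def
proof (intro ballI)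
  fix p q r assume h: "p \<in> P" "q \<in> P" "r \<in> B"
  have e1: "(if comp p q then M (pcat p q) r else 0) =
     (\<Sum>q'\<in>P. if comp p q' \<and> pcat p q' = r then M q q' else 0) +
     (\<Sum>p'\<in>P. if comp p' q \<and> pcat p' q = r then M p p' else 0)" using assms(1) h unfolding D2_def by blast
  show "(if comp p q then mat_scale k M (pcat p q) r else 0) =
     (\<Sum>q'\<in>P. if comp p q' \<and> pcat p q' = r then mat_scale k M q q' else 0) +
     (\<Sum>p'\<in>P. if comp p' q \<and> pcat p' q = r then mat_scale k M p p' else 0)"
    unfolding mat_scale_def if_mult0 sum_distrib_left[symmetric] e1 by (simp only: distrib_left)
qed

lemma Dl_char: "(Dl :: (_ \<Rightarrow> _ \<Rightarrow> 'k::field) set) = {M \<in> EM. rowB M \<and> D2 M}"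
proof
  show "(Dl :: (_ \<Rightarrow> _ \<Rightarrow> 'k::field) set) \<subseteq> {M \<in> EM. rowB M \<and> D2 M}"
    using D_props by (auto simp: der_lifts_def)
  show "{M \<in> EM. rowB M \<and> D2 M} \<subseteq> (Dl :: (_ \<Rightarrow> _ \<Rightarrow> 'k::field) set)"
    using basis_crit by blast
qed

lemma Dl_subspace: "module.subspace (mat_scale :: 'k::field \<Rightarrow> _) (Dl :: (_ \<Rightarrow> _ \<Rightarrow> 'k) set)"
proof -
  interpret vs: vector_space "mat_scale :: 'k \<Rightarrow> (('v,'a) path \<Rightarrow> ('v,'a) path \<Rightarrow> 'k) \<Rightarrow> _" by (rule vs_mat)
  have z: "D2 (0 :: _ \<Rightarrow> _ \<Rightarrow> 'k)" unfolding D2_def by (simp cong: if_cong)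
  show ?thesis unfolding Dl_char vs.subspace_def
  proof (intro conjI ballI allI)
    show "0 \<in> {M \<in> EM. rowB M \<and> D2 (M :: _ \<Rightarrow> _ \<Rightarrow> 'k)}" using z by (simp add: endo_mats_def rowB_def)
  next
    fix x y :: "_ \<Rightarrow> _ \<Rightarrow> 'k" assume "x \<in> {M \<in> EM. rowB M \<and> D2 M}" "y \<in> {M \<in> EM. rowB M \<and> D2 M}"
    then show "x + y \<in> {M \<in> EM. rowB M \<and> D2 M}"
      using D2_add by (auto simp: endo_mats_def rowB_def)
  next
    fix c and x :: "_ \<Rightarrow> _ \<Rightarrow> 'k" assume "x \<in> {M \<in> EM. rowB M \<and> D2 M}"
    then show "mat_scale c x \<in> {M \<in> EM. rowB M \<and> D2 M}"
      using D2_scale by (auto simp: endo_mats_def rowB_def mat_scale_def)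
  qed
qed

lemma Ad_add: "Ad (c1 + c2) = Ad c1 + Ad (c2 :: _ \<Rightarrow> 'k::field)"
proof (intro ext)
  fix p q
  show "Ad (c1 + c2) p q = (Ad c1 + Ad c2) p q"
  proof (cases "p \<in> P")
    case True
    have "pm (c1 + c2) (delta p) q = pm c1 (delta p) q + pm c2 (delta p) q"
      by (simp add: pmul_delta_r[OF True] if_add0 sum.distrib cong: if_cong)
    moreover have "pm (delta p) (c1 + c2) q = pm (delta p) c1 q + pm (delta p) c2 q"
      by (simp add: pmul_delta_l[OF True] if_add0 sum.distrib cong: if_cong)
    ultimately show ?thesis using True by (simp add: Ad_def)
  qed (simp add: Ad_def)
qed

lemma Ad_scale: "Ad (fscale k c) = mat_scale k (Ad (c :: _ \<Rightarrow> 'k::field))"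
proof (intro ext)
  fix p q
  show "Ad (fscale k c) p q = mat_scale k (Ad c) p q"
  proof (cases "p \<in> P")
    case True
    have "pm (fscale k c) (delta p) q = k * pm c (delta p) q"
      by (simp add: pmul_delta_r[OF True] fscale_def if_mult0 sum_distrib_left)
    moreover have "pm (delta p) (fscale k c) q = k * pm (delta p) c q"
      by (simp add: pmul_delta_l[OF True] fscale_def if_mult0 sum_distrib_left)
    ultimately show ?thesis using True by (simp add: Ad_def mat_scale_def right_diff_distrib)
  qed (simp add: Ad_def mat_scale_def)
qed

lemma Ad_zero: "Ad (\<lambda>_. 0) = (\<lambda>_ _. 0 :: 'k::field)"
  by (auto simp: Ad_def fun_eq_iff pmul_delta_r pmul_delta_l)

lemma Nl_char: "(Nl :: (_ \<Rightarrow> _ \<Rightarrow> 'k::field) set) = {M \<in> EM. \<exists>c\<in>A. piB M = piB (Ad c)}"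
proof
  show "(Nl :: (_ \<Rightarrow> _ \<Rightarrow> 'k::field) set) \<subseteq> {M \<in> EM. \<exists>c\<in>A. piB M = piB (Ad c)}"
    using Nl_piB by (auto simp: inn_lifts_def)
next
  show "{M \<in> EM. \<exists>c\<in>A. piB M = piB (Ad c)} \<subseteq> (Nl :: (_ \<Rightarrow> _ \<Rightarrow> 'k::field) set)"
  proof
    fix M :: "_ \<Rightarrow> _ \<Rightarrow> 'k" assume "M \<in> {M \<in> EM. \<exists>c\<in>A. piB M = piB (Ad c)}"
    then obtain c where ME: "M \<in> EM" and c: "c \<in> (A :: (_ \<Rightarrow> 'k) set)" and pc: "piB M = piB (Ad c)" by blast
    have "(\<lambda>r. mp M x r - (pm c x r - pm x c r)) \<in> I" if x: "x \<in> (A :: (_ \<Rightarrow> 'k) set)" for x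
    proof -
      have inA: "(\<lambda>r. mp M x r - (pm c x r - pm x c r)) \<in> A"
        unfolding pathalg_def mem_Collect_eq
      proof (intro allI impI)
        fix r assume r: "r \<notin> P"
        have "mp M x r = 0" using mapp_A[OF ME] r unfolding pathalg_def by blast
        moreover have "pm c x r = 0" "pm x c r = 0" using pmul_A r unfolding pathalg_def by blast+
        ultimately show "mp M x r - (pm c x r - pm x c r) = 0" by simp
      qed
      have "\<forall>r\<in>B. mp M x r - (pm c x r - pm x c r) = 0"
      proof
        fix r assume r: "r \<in> B"
        have "mp M x r = mp (Ad c) x r"
          unfolding mapp_def
        proof (rule sum.cong[OF refl])
          fix p assume "p \<in> P"
          have "piB M p r = piB (Ad c) p r" using pc by simp
          then show "x p * M p r = x p * Ad c p r" using r by (simp add: piB_def)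
        qed
        then show "mp M x r - (pm c x r - pm x c r) = 0" by (simp add: mapp_Ad)
      qed
      then show ?thesis using inA I_iff by blast
    qed
    then show "M \<in> Nl" unfolding inn_lifts_def using ME c by blast
  qed
qed

lemma Nl_subspace: "module.subspace (mat_scale :: 'k::field \<Rightarrow> _) (Nl :: (_ \<Rightarrow> _ \<Rightarrow> 'k) set)"
proof -
  interpret vs: vector_space "mat_scale :: 'k \<Rightarrow> (('v,'a) path \<Rightarrow> ('v,'a) path \<Rightarrow> 'k) \<Rightarrow> _" by (rule vs_mat)
  have zA: "(\<lambda>_. 0 :: 'k) \<in> A" by (simp add: pathalg_def)
  show ?thesis unfolding Nl_char vs.subspace_def
  proof (intro conjI ballI allI)
    have "piB (0 :: _ \<Rightarrow> _ \<Rightarrow> 'k) = piB (Ad (\<lambda>_. 0 :: 'k))" by (simp add: Ad_zero piB_def fun_eq_iff)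
    moreover have "(0 :: _ \<Rightarrow> _ \<Rightarrow> 'k) \<in> EM" by (simp add: endo_mats_def)
    ultimately show "0 \<in> {M \<in> EM. \<exists>c\<in>A. piB M = piB (Ad (c :: _ \<Rightarrow> 'k))}"
      using zA by blast
  next
    fix x y :: "_ \<Rightarrow> _ \<Rightarrow> 'k" assume x: "x \<in> {M \<in> EM. \<exists>c\<in>A. piB M = piB (Ad c)}" and y: "y \<in> {M \<in> EM. \<exists>c\<in>A. piB M = piB (Ad c)}"
    then obtain c1 c2 where c: "c1 \<in> A" "c2 \<in> A" "piB x = piB (Ad c1)" "piB y = piB (Ad c2)" by blast
    have "c1 + c2 \<in> A" using c by (simp add: pathalg_def)
    moreover have "piB (x + y) = piB (Ad (c1 + c2))"
      using c unfolding Ad_add by (simp add: piB_def fun_eq_iff) (metis)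
    ultimately show "x + y \<in> {M \<in> EM. \<exists>c\<in>A. piB M = piB (Ad c)}" using x y by (auto simp: endo_mats_def)
  next
    fix k and x :: "_ \<Rightarrow> _ \<Rightarrow> 'k" assume x: "x \<in> {M \<in> EM. \<exists>c\<in>A. piB M = piB (Ad c)}"
    then obtain c where c: "c \<in> A" "piB x = piB (Ad c)" by blast
    have "fscale k c \<in> A" using c by (simp add: pathalg_def fscale_def)
    moreover have "piB (mat_scale k x) = piB (Ad (fscale k c))"
      using c unfolding Ad_scale by (simp add: piB_def fun_eq_iff mat_scale_def) (metis)
    ultimately show "mat_scale k x \<in> {M \<in> EM. \<exists>c\<in>A. piB M = piB (Ad c)}" using x by (auto simp: endo_mats_def mat_scale_def)
  qed
qed

end


context mq begin

definition Phi :: "(('v,'a) path \<Rightarrow> ('v,'a) path \<Rightarrow> 'k::field) \<Rightarrow> ('a \<times> ('v,'a) path \<Rightarrow> 'k)" where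
  "Phi M = (\<lambda>x. M (arr (fst x)) (snd x))"

definition Fm :: "(('v,'a) path \<Rightarrow> 'k::field) \<Rightarrow> (('v,'a) path \<Rightarrow> ('v,'a) path \<Rightarrow> 'k)" where
  "Fm c = piB (Ad c)"

definition Vx :: "('v,'a) path set" where "Vx = (\<lambda>v. (v, [])) ` Q0"

definition uu :: "('v,'a) path \<Rightarrow> 'k::field" where "uu = (\<lambda>x. if x \<in> Vx then 1 else 0)"

definition Emat :: "('v,'a) path \<times> ('v,'a) path \<Rightarrow> (('v,'a) path \<Rightarrow> ('v,'a) path \<Rightarrow> 'k::field)" where
  "Emat pq = (\<lambda>p' q'. if p' = fst pq \<and> q' = snd pq then 1 else 0)"

lemma lin_piB: "Vector_Spaces.linear (mat_scale :: 'k::field \<Rightarrow> _) mat_scale (piB :: _ \<Rightarrow> _ \<Rightarrow> _ \<Rightarrow> 'k)"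
  unfolding Vector_Spaces.linear_iff using vs_mat by (auto simp: piB_def mat_scale_def fun_eq_iff)

lemma lin_rho: "Vector_Spaces.linear (mat_scale :: 'k::field \<Rightarrow> _) mat_scale (rho :: _ \<Rightarrow> _ \<Rightarrow> _ \<Rightarrow> 'k)"
  unfolding Vector_Spaces.linear_iff using vs_mat by (auto simp: rho_def mat_scale_def fun_eq_iff)

lemma lin_Phi: "Vector_Spaces.linear (mat_scale :: 'k::field \<Rightarrow> _) fscale (Phi :: _ \<Rightarrow> _ \<Rightarrow> 'k)"
  unfolding Vector_Spaces.linear_iff using vs_mat vs_fscale by (auto simp: Phi_def mat_scale_def fscale_def fun_eq_iff)

lemma lin_Fm: "Vector_Spaces.linear (fscale :: 'k::field \<Rightarrow> _) mat_scale (Fm :: _ \<Rightarrow> _ \<Rightarrow> _ \<Rightarrow> 'k)"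
  unfolding Vector_Spaces.linear_iff using vs_mat vs_fscale
  by (auto simp: Fm_def Ad_add Ad_scale piB_def mat_scale_def fun_eq_iff)

lemma finite_Eset: "finite (Emat ` (P \<times> P))" using finite_P by simp

lemma EM_span: "(EM :: (_ \<Rightarrow> _ \<Rightarrow> 'k::field) set) \<subseteq> module.span (mat_scale :: 'k \<Rightarrow> _) (Emat ` (P \<times> P))"
proof
  interpret vs: vector_space "mat_scale :: 'k \<Rightarrow> (('v,'a) path \<Rightarrow> ('v,'a) path \<Rightarrow> 'k) \<Rightarrow> _" by (rule vs_mat)
  fix M :: "_ \<Rightarrow> _ \<Rightarrow> 'k" assume M: "M \<in> EM"
  have fPP: "finite (P \<times> P)" using finite_P by simp
  have "M = (\<Sum>pq\<in>P \<times> P. mat_scale (M (fst pq) (snd pq)) (Emat pq))"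
  proof (intro ext)
    fix p q
    have "(\<Sum>pq\<in>P \<times> P. mat_scale (M (fst pq) (snd pq)) (Emat pq)) p q
        = (\<Sum>pq\<in>P \<times> P. if pq = (p, q) then M p q else 0)"
      unfolding sum_fun_apply[OF fPP] by (rule sum.cong) (auto simp: mat_scale_def Emat_def)
    also have "\<dots> = M p q"
    proof (cases "(p, q) \<in> P \<times> P")
      case True then show ?thesis using fPP by simp
    next
      case False
      then have "M p q = 0" using M unfolding endo_mats_def by blast
      then show ?thesis using False by (auto intro!: sum.neutral)
    qed
    finally show "M p q = (\<Sum>pq\<in>P \<times> P. mat_scale (M (fst pq) (snd pq)) (Emat pq)) p q" by simp
  qed
  also have "\<dots> \<in> vs.span (Emat ` (P \<times> P))"
  proof (rule vs.span_sum)
    fix pq assume "pq \<in> P \<times> P"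
    then have "Emat pq \<in> vs.span (Emat ` (P \<times> P))" by (intro vs.span_base) auto
    then show "mat_scale (M (fst pq) (snd pq)) (Emat pq) \<in> vs.span (Emat ` (P \<times> P))" by (rule vs.span_scale)
  qed
  finally show "M \<in> vs.span (Emat ` (P \<times> P))" .
qed

lemma Dl_EM: "(Dl :: (_ \<Rightarrow> _ \<Rightarrow> 'k::field) set) \<subseteq> EM" by (auto simp: der_lifts_def)
lemma Nl_EM: "(Nl :: (_ \<Rightarrow> _ \<Rightarrow> 'k::field) set) \<subseteq> EM" by (auto simp: inn_lifts_def)

lemma EMK_Dl:
  assumes M: "(M :: _ \<Rightarrow> _ \<Rightarrow> 'k::field) \<in> EM" and K: "piB M = (\<lambda>_ _. 0)"
  shows "M \<in> Dl"
proof -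
  have z: "M p q = 0" if "q \<in> B" for p q
  proof -
    have "piB M p q = 0" using K by simp
    then show ?thesis using that by (simp add: piB_def)
  qed
  have rb: "rowB M" using z by (simp add: rowB_def)
  have d: "D2 M" unfolding D2_def
  proof (intro ballI)
    fix p q r assume p: "p \<in> P" and q: "q \<in> P" and r: "r \<in> B"
    have s1: "(\<Sum>q'\<in>P. if comp p q' \<and> pcat p q' = r then M q q' else 0) = 0"
    proof (rule sum.neutral, intro ballI)
      fix q' assume q': "q' \<in> P"
      show "(if comp p q' \<and> pcat p q' = r then M q q' else 0) = 0"
      proof (cases "comp p q' \<and> pcat p q' = r")
        case True then have "q' \<in> B" using pcat_B[OF p q'] r by auto
        then show ?thesis using z by simp
      qed auto
    qed
    have s2: "(\<Sum>p'\<in>P. if comp p' q \<and> pcat p' q = r then M p p' else 0) = 0"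
    proof (rule sum.neutral, intro ballI)
      fix p' assume p': "p' \<in> P"
      show "(if comp p' q \<and> pcat p' q = r then M p p' else 0) = 0"
      proof (cases "comp p' q \<and> pcat p' q = r")
        case True then have "p' \<in> B" using pcat_B[OF p' q] r by auto
        then show ?thesis using z by simp
      qed auto
    qed
    show "(if comp p q then M (pcat p q) r else 0) =
     (\<Sum>q'\<in>P. if comp p q' \<and> pcat p q' = r then M q q' else 0) +
     (\<Sum>p'\<in>P. if comp p' q \<and> pcat p' q = r then M p p' else 0)"
      unfolding s1 s2 using z r by simp
  qed
  show ?thesis by (rule basis_crit[OF M rb d])
qed

lemma EMK_Nl:
  assumes M: "(M :: _ \<Rightarrow> _ \<Rightarrow> 'k::field) \<in> EM" and K: "piB M = (\<lambda>_ _. 0)"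
  shows "M \<in> Nl"
proof -
  have "piB M = piB (Ad (\<lambda>_. 0 :: 'k))" using K by (simp add: Ad_zero piB_def fun_eq_iff)
  moreover have "(\<lambda>_. 0 :: 'k) \<in> A" by (simp add: pathalg_def)
  ultimately show ?thesis unfolding Nl_char using M by blast
qed

lemma ker_eq: "(Dl :: (_ \<Rightarrow> _ \<Rightarrow> 'k::field) set) \<inter> {M. piB M = 0} = Nl \<inter> {M. piB M = 0}"
proof -
  have "(Dl :: (_ \<Rightarrow> _ \<Rightarrow> 'k::field) set) \<inter> {M. piB M = 0} = {M \<in> EM. piB M = 0}"
    using Dl_EM EMK_Dl by (auto simp: zero_fun_def)
  moreover have "(Nl :: (_ \<Rightarrow> _ \<Rightarrow> 'k::field) set) \<inter> {M. piB M = 0} = {M \<in> EM. piB M = 0}"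
    using Nl_EM EMK_Nl by (auto simp: zero_fun_def)
  ultimately show ?thesis by simp
qed

lemma DB_der0: "piB ` (Dl :: (_ \<Rightarrow> _ \<Rightarrow> 'k::field) set) \<inter> {M. rho M = 0} = {M. der0 M}"
proof
  show "piB ` (Dl :: (_ \<Rightarrow> _ \<Rightarrow> 'k::field) set) \<inter> {M. rho M = 0} \<subseteq> {M. der0 M}"
    using piB_Dl piB_idem by (auto simp: der0_def zero_fun_def)
  show "{M. der0 M} \<subseteq> piB ` (Dl :: (_ \<Rightarrow> _ \<Rightarrow> 'k::field) set) \<inter> {M. rho M = 0}"
  proof
    fix M :: "_ \<Rightarrow> _ \<Rightarrow> 'k" assume "M \<in> {M. der0 M}"
    then have "M \<in> Dl" "piB M = M" "rho M = 0" by (auto simp: der0_def zero_fun_def)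
    then show "M \<in> piB ` Dl \<inter> {M. rho M = 0}" by (metis (mono_tags) IntI image_eqI mem_Collect_eq)
  qed
qed

lemma rho_images: "rho ` piB ` (Dl :: (_ \<Rightarrow> _ \<Rightarrow> 'k::field) set) = rho ` piB ` Nl"
proof
  show "rho ` piB ` (Dl :: (_ \<Rightarrow> _ \<Rightarrow> 'k::field) set) \<subseteq> rho ` piB ` Nl"
  proof
    fix X :: "_ \<Rightarrow> _ \<Rightarrow> 'k" assume "X \<in> rho ` piB ` Dl"
    then obtain M where M: "M \<in> Dl" "X = rho (piB M)" by blast
    obtain c where c: "c \<in> (A :: (_ \<Rightarrow> 'k) set)" "rho (piB M) = rho (piB (Ad c))"
      using rho_DB[OF piB_Dl[OF M(1)] piB_idem] by blast
    have "Ad c \<in> Nl" using Ad_Nl[OF c(1)] .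
    then show "X \<in> rho ` piB ` Nl" using M(2) c(2) by blast
  qed
  show "rho ` piB ` (Nl :: (_ \<Rightarrow> _ \<Rightarrow> 'k::field) set) \<subseteq> rho ` piB ` Dl"
  proof
    fix X :: "_ \<Rightarrow> _ \<Rightarrow> 'k" assume "X \<in> rho ` piB ` Nl"
    then obtain N where N: "N \<in> Nl" "X = rho (piB N)" by blast
    obtain c where c: "c \<in> (A :: (_ \<Rightarrow> 'k) set)" "piB N = piB (Ad c)" using Nl_piB[OF N(1)] by blast
    have "Ad c \<in> Dl" by (rule Ad_Dl)
    then show "X \<in> rho ` piB ` Dl" using N(2) c(2) by blast
  qed
qed

end


context mq begin

lemma Vx_P: "Vx \<subseteq> P" using ev_P by (auto simp: Vx_def)
lemma finite_Vx: "finite Vx" using finite_P Vx_P finite_subset by blast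
lemma card_Vx: "card Vx = card Q0"
  unfolding Vx_def by (rule card_image) (auto simp: inj_on_def)

lemma W_A: "coord Vx \<subseteq> (A :: (_ \<Rightarrow> 'k::field) set)"
  using Vx_P by (auto simp: coord_def pathalg_def)

lemma Ad_congB:
  assumes "\<And>r. r \<in> B \<Longrightarrow> c1 r = c2 r"
  shows "piB (Ad c1) = piB (Ad (c2 :: _ \<Rightarrow> 'k::field))"
proof (intro ext)
  fix p q
  show "piB (Ad c1) p q = piB (Ad c2) p q"
  proof (cases "p \<in> P \<and> q \<in> B")
    case True
    then have p: "p \<in> P" and q: "q \<in> B" by auto
    have "pm c1 (delta p) q = pm c2 (delta p) q" unfolding pmul_delta_r[OF p]
    proof (rule sum.cong[OF refl])
      fix x assume x: "x \<in> P"
      show "(if comp x p \<and> pcat x p = q then c1 x else 0) = (if comp x p \<and> pcat x p = q then c2 x else 0)"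
      proof (cases "comp x p \<and> pcat x p = q")
        case True then have "x \<in> B" using pcat_B[OF x p] q by auto
        then show ?thesis using assms True by simp
      qed auto
    qed
    moreover have "pm (delta p) c1 q = pm (delta p) c2 q" unfolding pmul_delta_l[OF p]
    proof (rule sum.cong[OF refl])
      fix x assume x: "x \<in> P"
      show "(if comp p x \<and> pcat p x = q then c1 x else 0) = (if comp p x \<and> pcat p x = q then c2 x else 0)"
      proof (cases "comp p x \<and> pcat p x = q")
        case True then have "x \<in> B" using pcat_B[OF p x] q by auto
        then show ?thesis using assms True by simp
      qed auto
    qed
    ultimately show ?thesis using p q by (simp add: piB_def Ad_def)
  next
    case False then show ?thesis by (auto simp: piB_def Ad_def)
  qed
qed

lemma Ad_vtx:
  assumes w: "w \<in> Q0" and q: "q \<in> B"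
  shows "Ad c (w, []) q = (if ptgt t q = w then c q else 0) - (if psrc q = w then c q else (0::'k::field))"
proof -
  have qP: "q \<in> P" using q B_P by blast
  show ?thesis using ev_P[OF w] by (simp add: Ad_def pm_ev_r[OF w qP] pm_ev_l[OF w qP])
qed

lemma Inn0_eq: "piB ` (Nl :: (_ \<Rightarrow> _ \<Rightarrow> 'k::field) set) \<inter> {M. rho M = 0} = Fm ` coord Vx"
proof
  show "Fm ` coord Vx \<subseteq> piB ` (Nl :: (_ \<Rightarrow> _ \<Rightarrow> 'k::field) set) \<inter> {M. rho M = 0}"
  proof
    fix X :: "_ \<Rightarrow> _ \<Rightarrow> 'k" assume "X \<in> Fm ` coord Vx"
    then obtain c where c: "c \<in> coord Vx" "X = piB (Ad c)" unfolding Fm_def by blast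
    have cA: "c \<in> A" using c(1) W_A by blast
    have "rho (piB (Ad c)) = 0"
    proof (intro ext)
      fix p q
      show "rho (piB (Ad c)) p q = 0 p q"
      proof (cases "snd p = [] \<and> q \<in> B")
        case True
        obtain w where pw: "p = (w, [])" using True by (cases p) auto
        show ?thesis
        proof (cases "w \<in> Q0")
          case w: True
          have "(if ptgt t q = w then c q else 0) - (if psrc q = w then c q else 0) = 0"
          proof (cases "c q = 0")
            case False
            then have "q \<in> Vx" using c(1) unfolding coord_def by blast
            then have "psrc q = ptgt t q" by (auto simp: Vx_def psrc_def ptgt_def)
            then show ?thesis by simp
          qed simp
          then show ?thesis using Ad_vtx[OF w, of q c] True pw by (simp add: rho_def piB_def)
        next
          case False
          then have "p \<notin> P" using pw by (simp add: inP)
          then show ?thesis by (simp add: rho_def piB_def Ad_def)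
        qed
      next
        case False then show ?thesis by (auto simp: rho_def piB_def)
      qed
    qed
    moreover have "piB (Ad c) \<in> piB ` Nl" using Ad_Nl[OF cA] by blast
    ultimately show "X \<in> piB ` Nl \<inter> {M. rho M = 0}" using c(2) by blast
  qed
  show "piB ` (Nl :: (_ \<Rightarrow> _ \<Rightarrow> 'k::field) set) \<inter> {M. rho M = 0} \<subseteq> Fm ` coord Vx"
  proof
    fix X :: "_ \<Rightarrow> _ \<Rightarrow> 'k" assume "X \<in> piB ` Nl \<inter> {M. rho M = 0}"
    then obtain N where N: "N \<in> Nl" "X = piB N" "rho X = 0" by blast
    obtain c where c: "c \<in> (A :: (_ \<Rightarrow> 'k) set)" "piB N = piB (Ad c)" using Nl_piB[OF N(1)] by blast
    define c' where "c' = (\<lambda>x. if snd x = [] then c x else 0)"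
    have cw: "c' \<in> coord Vx"
    proof -
      have "c' x = 0" if "x \<notin> Vx" for x
      proof (cases "snd x = []")
        case True
        then have "x \<notin> P"
          using that by (cases x) (auto simp: Vx_def inP)
        then have "c x = 0" using c(1) unfolding pathalg_def by blast
        then show ?thesis by (simp add: c'_def)
      qed (simp add: c'_def)
      then show ?thesis by (simp add: coord_def)
    qed
    have eqB: "c r = c' r" if r: "r \<in> B" for r
    proof (cases "snd r = []")
      case True then show ?thesis by (simp add: c'_def)
    next
      case False
      have rP: "r \<in> P" using r B_P by blast
      have w: "ptgt t r \<in> Q0" using ptgt_Q0[OF rP] .
      have st: "psrc r \<noteq> ptgt t r" using acyc[of "fst r" "snd r"] rP False by (cases r) (auto simp: psrc_def)
      have "rho X (ptgt t r, []) r = 0" using N(3) by simp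
      then have "piB (Ad c) (ptgt t r, []) r = 0" using N(2) c(2) by (simp add: rho_def)
      then have "Ad c (ptgt t r, []) r = 0" using r by (simp add: piB_def)
      then have "c r = 0" using Ad_vtx[OF w r, of c] st by simp
      then show ?thesis by (simp add: c'_def)
    qed
    have "X = Fm c'" unfolding Fm_def using N(2) c(2) Ad_congB[OF eqB] by simp
    then show "X \<in> Fm ` coord Vx" using cw by blast
  qed
qed

lemma Fm_arr:
  assumes a: "a \<in> Q1"
  shows "Fm c (arr a) (arr a) = c (s a, []) - c (t a, [])"
proof -
  have aP: "arr a \<in> P" using arr_P a by blast
  have aB: "arr a \<in> B" using arr_B a by blast
  have sa: "(s a, []) \<in> P" "(t a, []) \<in> P" using ev_P st_Q0 a by auto
  have "pm c (delta (arr a)) (arr a) = (\<Sum>x\<in>P. if x = (s a, []) then c (s a, []) else 0)"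
    unfolding pmul_delta_r[OF aP]
  proof (rule sum.cong[OF refl])
    fix x assume "x \<in> P"
    have "comp x (arr a) \<and> pcat x (arr a) = arr a \<longleftrightarrow> x = (s a, [])"
      by (cases x) (auto simp: arr_def pcat_def ptgt_def psrc_def)
    then show "(if comp x (arr a) \<and> pcat x (arr a) = arr a then c x else 0) = (if x = (s a, []) then c (s a, []) else 0)"
      by auto
  qed
  also have "\<dots> = c (s a, [])" using sa by (simp add: finite_P)
  finally have e1: "pm c (delta (arr a)) (arr a) = c (s a, [])" .
  have "pm (delta (arr a)) c (arr a) = (\<Sum>x\<in>P. if x = (t a, []) then c (t a, []) else 0)"
    unfolding pmul_delta_l[OF aP]
  proof (rule sum.cong[OF refl])
    fix x assume "x \<in> P"
    have "comp (arr a) x \<and> pcat (arr a) x = arr a \<longleftrightarrow> x = (t a, [])"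
      by (cases x) (auto simp: arr_def pcat_def ptgt_def psrc_def)
    then show "(if comp (arr a) x \<and> pcat (arr a) x = arr a then c x else 0) = (if x = (t a, []) then c (t a, []) else 0)"
      by auto
  qed
  also have "\<dots> = c (t a, [])" using sa by (simp add: finite_P)
  finally have e2: "pm (delta (arr a)) c (arr a) = c (t a, [])" .
  show ?thesis using e1 e2 aP aB by (simp add: Fm_def piB_def Ad_def)
qed

lemma Fm_uu: "Fm (uu :: _ \<Rightarrow> 'k::field) = 0"
proof (intro ext)
  fix p q
  show "Fm (uu :: _ \<Rightarrow> 'k) p q = 0 p q"
  proof (cases "p \<in> P \<and> q \<in> B")
    case True
    then have p: "p \<in> P" and q: "q \<in> B" by auto
    have fp: "(fst p, []) \<in> P" using p ev_P by (simp add: inP')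
    have e1: "pm uu (delta p) q = (\<Sum>x\<in>P. if x = (fst p, []) then (if q = p then 1 else 0) else (0::'k))"
      unfolding pmul_delta_r[OF p]
    proof (rule sum.cong[OF refl])
      fix x assume x: "x \<in> P"
      show "(if comp x p \<and> pcat x p = q then uu x else 0) = (if x = (fst p, []) then (if q = p then 1 else 0) else (0::'k))"
      proof (cases "x \<in> Vx")
        case True
        then obtain v where "x = (v, [])" by (auto simp: Vx_def)
        then show ?thesis using True by (auto simp: uu_def pcat_def ptgt_def psrc_def prod_eq_iff)
      next
        case False
        moreover have "x \<noteq> (fst p, [])" using False fp p by (auto simp: Vx_def inP')
        ultimately show ?thesis by (simp add: uu_def)
      qed
    qed
    have e2: "pm (delta p) uu q = (\<Sum>x\<in>P. if x = (ptgt t p, []) then (if q = p then 1 else 0) else (0::'k))"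
      unfolding pmul_delta_l[OF p]
    proof (rule sum.cong[OF refl])
      fix x assume x: "x \<in> P"
      show "(if comp p x \<and> pcat p x = q then uu x else 0) = (if x = (ptgt t p, []) then (if q = p then 1 else 0) else (0::'k))"
      proof (cases "x \<in> Vx")
        case True
        then obtain v where "x = (v, [])" by (auto simp: Vx_def)
        then show ?thesis using True by (auto simp: uu_def pcat_def ptgt_def psrc_def prod_eq_iff)
      next
        case False
        have tp: "(ptgt t p, []) \<in> Vx" using ptgt_Q0[OF p] by (auto simp: Vx_def)
        then have "x \<noteq> (ptgt t p, [])" using False by auto
        then show ?thesis using False by (simp add: uu_def)
      qed
    qed
    have tpP: "(ptgt t p, []) \<in> P" using ev_P ptgt_Q0[OF p] by blast
    have "pm (uu :: _ \<Rightarrow> 'k) (delta p) q = pm (delta p) uu q" unfolding e1 e2 using fp tpP by (simp add: finite_P)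
    then show ?thesis using p q by (simp add: Fm_def piB_def Ad_def)
  next
    case False then show ?thesis by (auto simp: Fm_def piB_def Ad_def)
  qed
qed

lemma ker_Fm: "coord Vx \<inter> {c. Fm c = 0} = range (\<lambda>k. fscale k (uu :: _ \<Rightarrow> 'k::field))"
proof
  show "range (\<lambda>k. fscale k (uu :: _ \<Rightarrow> 'k)) \<subseteq> coord Vx \<inter> {c. Fm c = 0}"
  proof
    fix c :: "_ \<Rightarrow> 'k" assume "c \<in> range (\<lambda>k. fscale k uu)"
    then obtain k where k: "c = fscale k uu" by blast
    have "c \<in> coord Vx" using k by (auto simp: coord_def fscale_def uu_def)
    moreover have "Fm c = 0"
    proof -
      have "Fm c = mat_scale k (Fm (uu :: _ \<Rightarrow> 'k))" by (simp add: k Fm_def Ad_scale piB_def mat_scale_def fun_eq_iff)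
      then show ?thesis by (simp add: Fm_uu mat_scale_def zero_fun_def)
    qed
    ultimately show "c \<in> coord Vx \<inter> {c. Fm c = 0}" by blast
  qed
  show "coord Vx \<inter> {c. Fm c = 0} \<subseteq> range (\<lambda>k. fscale k (uu :: _ \<Rightarrow> 'k))"
  proof
    fix c :: "_ \<Rightarrow> 'k" assume c: "c \<in> coord Vx \<inter> {c. Fm c = 0}"
    have edge: "c (s a, []) = c (t a, [])" if a: "a \<in> Q1" for a
    proof -
      have "Fm c (arr a) (arr a) = 0" using c by simp
      then show ?thesis using Fm_arr[OF a, of c] by simp
    qed
    obtain v0 where v0: "v0 \<in> Q0" using cq by (auto simp: connected_quiver_def)
    have conn: "c (v, []) = c (v0, [])" if v: "v \<in> Q0" for v
    proof -
      have "(v0, v) \<in> ({(s a, t a) | a. a \<in> Q1} \<union> {(t a, s a) | a. a \<in> Q1})\<^sup>*"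
        using cq v0 v by (auto simp: connected_quiver_def)
      then show ?thesis
      proof (induction rule: rtrancl_induct)
        case base then show ?case by simp
      next
        case (step y z) then show ?case using edge by auto
      qed
    qed
    have "c = fscale (c (v0, [])) uu"
    proof (intro ext)
      fix x
      show "c x = fscale (c (v0, [])) uu x"
      proof (cases "x \<in> Vx")
        case True
        then obtain v where "v \<in> Q0" "x = (v, [])" by (auto simp: Vx_def)
        then show ?thesis using conn True by (simp add: fscale_def uu_def)
      next
        case False
        moreover have "c x = 0" using c False unfolding coord_def by blast
        ultimately show ?thesis by (simp add: fscale_def uu_def)
      qed
    qed
    then show "c \<in> range (\<lambda>k. fscale k uu)" by blast
  qed
qed

lemma uu_ne: "(uu :: _ \<Rightarrow> 'k::field) \<noteq> 0"
proof -
  obtain v0 where v0: "v0 \<in> Q0" using cq by (auto simp: connected_quiver_def)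
  then have "(uu :: _ \<Rightarrow> 'k) (v0, []) = 1" by (simp add: uu_def Vx_def)
  then show ?thesis by (metis one_neq_zero zero_fun_apply)
qed

end


lemma dim_zero_mat: "vector_space.dim (mat_scale :: 'k::field \<Rightarrow> ('p \<Rightarrow> 'p \<Rightarrow> 'k) \<Rightarrow> _) ({0}) = 0"
proof -
  interpret vm: vector_space "mat_scale :: 'k \<Rightarrow> ('p \<Rightarrow> 'p \<Rightarrow> 'k) \<Rightarrow> _" by (rule vs_mat)
  have "vm.independent ({} :: ('p \<Rightarrow> 'p \<Rightarrow> 'k) set)" by (rule vm.independent_empty)
  then have "vm.dim ({} :: ('p \<Rightarrow> 'p \<Rightarrow> 'k) set) = 0" using vm.dim_eq_card_independent by fastforce
  moreover have "vm.dim ({0} :: ('p \<Rightarrow> 'p \<Rightarrow> 'k) set) = vm.dim ({} :: ('p \<Rightarrow> 'p \<Rightarrow> 'k) set)"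
    using vm.dim_span[of "{}"] by simp
  ultimately show ?thesis by simp
qed

context mq begin

abbreviation NE where "NE \<equiv> non_effective Q0 Q1 s t Z"

lemma finite_NE: "finite NE"
proof -
  have "NE \<subseteq> Q1 \<times> P" using B_P by (auto simp: non_effective_def parallel_pairs_def)
  moreover have "finite (Q1 \<times> P)" using fq finite_P by (simp add: finite_quiver_def)
  ultimately show ?thesis by (rule finite_subset)
qed

lemma Phi_der0: assumes M: "der0 (M :: _ \<Rightarrow> _ \<Rightarrow> 'k::field)" shows "Phi M \<in> coord NE"
  unfolding coord_def mem_Collect_eq
proof (intro allI impI)
  fix x assume x: "x \<notin> NE"
  obtain a e where ae: "x = (a, e)" by (cases x)
  show "Phi M x = 0"
  proof (cases "a \<in> Q1")
    case False
    then have "arr a \<notin> P" by (simp add: arr_def inP)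
    then show ?thesis using der0_row[OF M] ae by (simp add: Phi_def)
  next
    case a: True
    show ?thesis
    proof (rule ccontr)
      assume ne: "Phi M x \<noteq> 0"
      then have ne': "M (arr a) e \<noteq> 0" using ae by (simp add: Phi_def)
      have pp: "(a, e) \<in> parallel_pairs Q0 Q1 s t B"
        using der0_par[OF M a ne'] a by (simp add: parallel_pairs_def)
      then have "effective Q0 Q1 s t Z a e" using x ae by (simp add: non_effective_def)
      then have "M (arr a) e = 0" using der0_effective[OF M pp] by blast
      then show False using ne' by simp
    qed
  qed
qed

lemma Phi_Mae: assumes "x \<in> NE" shows "Phi (Mae (fst x) (snd x)) = (ind x :: _ \<Rightarrow> 'k::field)"
proof (intro ext)
  fix y
  obtain a e where x: "x = (a, e)" by (cases x)
  have ne: "(a, e) \<in> NE" using assms x by simp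
  show "Phi (Mae (fst x) (snd x)) y = (ind x y :: 'k)"
    using Mae_arr[OF ne, of "fst y" "snd y"] x by (cases y) (auto simp: Phi_def ind_def)
qed

theorem main:
  "int (vector_space.dim (mat_scale :: 'k::field \<Rightarrow> _) (Dl :: (_ \<Rightarrow> _ \<Rightarrow> 'k) set))
   - int (vector_space.dim (mat_scale :: 'k \<Rightarrow> _) (Nl :: (_ \<Rightarrow> _ \<Rightarrow> 'k) set))
   = 1 - int (card Q0) + int (card NE)"
proof -
  interpret vm: vector_space "mat_scale :: 'k \<Rightarrow> (('v,'a) path \<Rightarrow> ('v,'a) path \<Rightarrow> 'k) \<Rightarrow> _" by (rule vs_mat)
  interpret vf: vector_space "fscale :: 'k \<Rightarrow> (('v,'a) path \<Rightarrow> 'k) \<Rightarrow> _" by (rule vs_fscale)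
  interpret vg: vector_space "fscale :: 'k \<Rightarrow> ('a \<times> ('v,'a) path \<Rightarrow> 'k) \<Rightarrow> _" by (rule vs_fscale)
  interpret mm: vector_space_pair "mat_scale :: 'k \<Rightarrow> (('v,'a) path \<Rightarrow> ('v,'a) path \<Rightarrow> 'k) \<Rightarrow> _"
    "mat_scale :: 'k \<Rightarrow> (('v,'a) path \<Rightarrow> ('v,'a) path \<Rightarrow> 'k) \<Rightarrow> _" ..
  interpret mg: vector_space_pair "mat_scale :: 'k \<Rightarrow> (('v,'a) path \<Rightarrow> ('v,'a) path \<Rightarrow> 'k) \<Rightarrow> _"
    "fscale :: 'k \<Rightarrow> ('a \<times> ('v,'a) path \<Rightarrow> 'k) \<Rightarrow> _" ..
  interpret fm: vector_space_pair "fscale :: 'k \<Rightarrow> (('v,'a) path \<Rightarrow> 'k) \<Rightarrow> _"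
    "mat_scale :: 'k \<Rightarrow> (('v,'a) path \<Rightarrow> ('v,'a) path \<Rightarrow> 'k) \<Rightarrow> _" ..
  let ?E = "Emat ` (P \<times> P) :: (_ \<Rightarrow> _ \<Rightarrow> 'k) set"
  have fE: "finite ?E" by (rule finite_Eset)
  have EMs: "(EM :: (_ \<Rightarrow> _ \<Rightarrow> 'k) set) \<subseteq> vm.span ?E" by (rule EM_span)
  have sDl: "vm.subspace (Dl :: (_ \<Rightarrow> _ \<Rightarrow> 'k) set)" by (rule Dl_subspace)
  have sNl: "vm.subspace (Nl :: (_ \<Rightarrow> _ \<Rightarrow> 'k) set)" by (rule Nl_subspace)
  have lpi: "Vector_Spaces.linear (mat_scale :: 'k \<Rightarrow> _) mat_scale (piB :: _ \<Rightarrow> _ \<Rightarrow> _ \<Rightarrow> 'k)" by (rule lin_piB)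
  have lrho: "Vector_Spaces.linear (mat_scale :: 'k \<Rightarrow> _) mat_scale (rho :: _ \<Rightarrow> _ \<Rightarrow> _ \<Rightarrow> 'k)" by (rule lin_rho)
  have lPhi: "Vector_Spaces.linear (mat_scale :: 'k \<Rightarrow> _) fscale (Phi :: _ \<Rightarrow> _ \<Rightarrow> 'k)" by (rule lin_Phi)
  have lFm: "Vector_Spaces.linear (fscale :: 'k \<Rightarrow> _) mat_scale (Fm :: _ \<Rightarrow> _ \<Rightarrow> _ \<Rightarrow> 'k)" by (rule lin_Fm)
  have d1: "vm.dim (Dl :: (_ \<Rightarrow> _ \<Rightarrow> 'k) set) = vm.dim (Dl \<inter> {x. piB x = 0}) + vm.dim (piB ` Dl)"
    by (rule mm.rank_nullity[OF lpi sDl fE]) (use Dl_EM EMs in blast)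
  have d2: "vm.dim (Nl :: (_ \<Rightarrow> _ \<Rightarrow> 'k) set) = vm.dim (Nl \<inter> {x. piB x = 0}) + vm.dim (piB ` Nl)"
    by (rule mm.rank_nullity[OF lpi sNl fE]) (use Nl_EM EMs in blast)
  have kk: "(Dl :: (_ \<Rightarrow> _ \<Rightarrow> 'k) set) \<inter> {x. piB x = 0} = Nl \<inter> {x. piB x = 0}" by (rule ker_eq)
  have sDB: "vm.subspace (piB ` (Dl :: (_ \<Rightarrow> _ \<Rightarrow> 'k) set))" by (rule mm.linear_subspace_image[OF lpi sDl])
  have sNB: "vm.subspace (piB ` (Nl :: (_ \<Rightarrow> _ \<Rightarrow> 'k) set))" by (rule mm.linear_subspace_image[OF lpi sNl])
  have DBE: "piB ` (Dl :: (_ \<Rightarrow> _ \<Rightarrow> 'k) set) \<subseteq> vm.span ?E" using Dl_EM piB_E EMs by blast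
  have NBE: "piB ` (Nl :: (_ \<Rightarrow> _ \<Rightarrow> 'k) set) \<subseteq> vm.span ?E" using Nl_EM piB_E EMs by blast
  have d3: "vm.dim (piB ` (Dl :: (_ \<Rightarrow> _ \<Rightarrow> 'k) set)) = vm.dim (piB ` Dl \<inter> {x. rho x = 0}) + vm.dim (rho ` piB ` Dl)"
    by (rule mm.rank_nullity[OF lrho sDB fE DBE])
  have d4: "vm.dim (piB ` (Nl :: (_ \<Rightarrow> _ \<Rightarrow> 'k) set)) = vm.dim (piB ` Nl \<inter> {x. rho x = 0}) + vm.dim (rho ` piB ` Nl)"
    by (rule mm.rank_nullity[OF lrho sNB fE NBE])
  have ri: "rho ` piB ` (Dl :: (_ \<Rightarrow> _ \<Rightarrow> 'k) set) = rho ` piB ` Nl" by (rule rho_images)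
  let ?D0 = "{M :: _ \<Rightarrow> _ \<Rightarrow> 'k. der0 M}"
  have D0eq: "piB ` (Dl :: (_ \<Rightarrow> _ \<Rightarrow> 'k) set) \<inter> {x. rho x = 0} = ?D0" by (rule DB_der0)
  have sD0: "vm.subspace ?D0"
    unfolding D0eq[symmetric] by (rule vm.subspace_inter[OF sDB mm.linear_subspace_kernel[OF lrho]])
  have D0E: "?D0 \<subseteq> vm.span ?E" using der0_E EMs by blast
  have d5: "vm.dim ?D0 = vm.dim (?D0 \<inter> {x. Phi x = 0}) + vg.dim (Phi ` ?D0)"
    by (rule mg.rank_nullity[OF lPhi sD0 fE D0E])
  have k5: "?D0 \<inter> {x. Phi x = 0} = {0}"
  proof
    show "?D0 \<inter> {x. Phi x = 0} \<subseteq> {0}"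
    proof
      fix M :: "_ \<Rightarrow> _ \<Rightarrow> 'k" assume M: "M \<in> ?D0 \<inter> {x. Phi x = 0}"
      then have "\<And>a e. M (arr a) e = 0" by (metis (mono_tags, lifting) IntD2 Phi_def fst_conv mem_Collect_eq snd_conv zero_fun_apply)
      then have "M = (\<lambda>_ _. 0)" using der0_zero M by blast
      then show "M \<in> {0}" by (simp add: zero_fun_def)
    qed
    show "{0} \<subseteq> ?D0 \<inter> {x. Phi x = 0}"
      using vm.subspace_0[OF sD0] by (simp add: Phi_def zero_fun_def)
  qed
  have i5: "Phi ` ?D0 = coord NE"
  proof
    show "Phi ` ?D0 \<subseteq> coord NE" using Phi_der0 by blast
    have sI: "vg.subspace (Phi ` ?D0)" by (rule mg.linear_subspace_image[OF lPhi sD0])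
    have "ind ` NE \<subseteq> Phi ` ?D0"
    proof
      fix y :: "_ \<Rightarrow> 'k" assume "y \<in> ind ` NE"
      then obtain x where x: "x \<in> NE" "y = ind x" by blast
      have "der0 (Mae (fst x) (snd x) :: _ \<Rightarrow> _ \<Rightarrow> 'k)" using Mae_der0[of "fst x" "snd x"] x(1) by simp
      then show "y \<in> Phi ` ?D0" using Phi_Mae[OF x(1)] x(2) by (metis (mono_tags, lifting) image_eqI mem_Collect_eq)
    qed
    then have "vg.span (ind ` NE) \<subseteq> Phi ` ?D0" using sI vg.span_minimal by blast
    moreover have "coord NE \<subseteq> vg.span (ind ` NE)"
    proof
      fix f :: "_ \<Rightarrow> 'k" assume f: "f \<in> coord NE"
      have "f = (\<Sum>y\<in>NE. fscale (f y) (ind y))" by (rule coord_span[OF finite_NE f])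
      also have "\<dots> \<in> vg.span (ind ` NE)"
      proof (rule vg.span_sum)
        fix y assume "y \<in> NE"
        then have "ind y \<in> vg.span (ind ` NE)" by (intro vg.span_base) auto
        then show "fscale (f y) (ind y) \<in> vg.span (ind ` NE)" by (rule vg.span_scale)
      qed
      finally show "f \<in> vg.span (ind ` NE)" .
    qed
    ultimately show "coord NE \<subseteq> Phi ` ?D0" by blast
  qed
  have z0: "vm.dim ({0} :: (_ \<Rightarrow> _ \<Rightarrow> 'k) set) = 0"
  proof -
    show ?thesis by (rule dim_zero_mat)
  qed
  have dc: "vg.dim (coord NE :: (_ \<Rightarrow> 'k) set) = card NE" by (rule dim_coord[OF finite_NE])
  have dD0: "vm.dim ?D0 = card NE"
    using d5 unfolding k5 i5 z0 dc by simp
  let ?W = "coord Vx :: (_ \<Rightarrow> 'k) set"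
  have sW: "vf.subspace ?W" by (auto simp: vf.subspace_def coord_def fscale_def)
  have WE: "?W \<subseteq> vf.span (ind ` Vx)"
  proof
    fix f :: "_ \<Rightarrow> 'k" assume f: "f \<in> ?W"
    have "f = (\<Sum>y\<in>Vx. fscale (f y) (ind y))" by (rule coord_span[OF finite_Vx f])
    also have "\<dots> \<in> vf.span (ind ` Vx)"
    proof (rule vf.span_sum)
      fix y assume "y \<in> Vx"
      then have "ind y \<in> vf.span (ind ` Vx)" by (intro vf.span_base) auto
      then show "fscale (f y) (ind y) \<in> vf.span (ind ` Vx)" by (rule vf.span_scale)
    qed
    finally show "f \<in> vf.span (ind ` Vx)" .
  qed
  have fW: "finite (ind ` Vx :: (_ \<Rightarrow> 'k) set)" using finite_Vx by simp
  have d6: "vf.dim ?W = vf.dim (?W \<inter> {x. Fm x = 0}) + vm.dim (Fm ` ?W)"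
    by (rule fm.rank_nullity[OF lFm sW fW WE])
  have dW0: "vf.dim ?W = card Vx" by (rule dim_coord[OF finite_Vx])
  have dW: "vf.dim ?W = card Q0" using dW0 card_Vx by simp
  have dK: "vf.dim (?W \<inter> {x. Fm x = 0}) = 1"
  proof -
    have "?W \<inter> {x. Fm x = 0} = range (\<lambda>k. fscale k (uu :: _ \<Rightarrow> 'k))" by (rule ker_Fm)
    also have "\<dots> = vf.span {uu}" by (rule vf.span_singleton[symmetric])
    finally have "vf.dim (?W \<inter> {x. Fm x = 0}) = vf.dim {uu :: _ \<Rightarrow> 'k}" by simp
    also have "\<dots> = card {uu :: _ \<Rightarrow> 'k}"
      by (rule vf.dim_eq_card_independent) (simp add: uu_ne)
    finally show ?thesis by simp
  qed
  have i6: "Fm ` ?W = piB ` (Nl :: (_ \<Rightarrow> _ \<Rightarrow> 'k) set) \<inter> {x. rho x = 0}" by (rule Inn0_eq[symmetric])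
  have "int (vm.dim (Dl :: (_ \<Rightarrow> _ \<Rightarrow> 'k) set)) - int (vm.dim (Nl :: (_ \<Rightarrow> _ \<Rightarrow> 'k) set))
      = int (vm.dim (piB ` (Dl :: (_ \<Rightarrow> _ \<Rightarrow> 'k) set))) - int (vm.dim (piB ` (Nl :: (_ \<Rightarrow> _ \<Rightarrow> 'k) set)))"
    using d1 d2 kk by simp
  also have "\<dots> = int (card NE) - int (vm.dim (piB ` (Nl :: (_ \<Rightarrow> _ \<Rightarrow> 'k) set) \<inter> {x. rho x = 0}))"
    using d3 d4 ri D0eq dD0 by simp
  also have "\<dots> = 1 - int (card Q0) + int (card NE)"
    using d6 dW dK i6 by simp
  finally show ?thesis .
qed

end

theorem theorem5p1:
  fixes Q0 :: "'v set" and Q1 :: "'a set" and s t :: "'a \<Rightarrow> 'v"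
    and Z :: "('v,'a) path set"
  assumes "finite_quiver Q0 Q1 s t"
    and "connected_quiver Q0 Q1 s t"
    and "acyclic_quiver Q0 Q1 s t"
    and "minimal_relations Q0 Q1 s t Z"
  shows "HH1_dim Q0 Q1 s t Z TYPE('k::field)
           = 1 - int (card Q0) + int (card (non_effective Q0 Q1 s t Z))"
proof -
  interpret mq Q0 Q1 s t Z using assms by (unfold_locales)
  show ?thesis unfolding HH1_dim_def by (rule main)
qed


end
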